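(* Let $(\mathscr C,A,\psi)$ be an entwining structure with $A$ finite dimensional over $K$, and suppose there exists a normalized cointegral $\gamma=\{\gamma_X:A^*\otimes\mathscr C(X,X)\to A\}_{X\in Ob(\mathscr C)}$ on $(\mathscr C,A,\psi)$. Then a morphism $\phi:\mathcal M\to\mathcal M'$ in $Com^{\mathscr C}_A(\psi)$ has a section (resp. a retraction) in $Com^{\mathscr C}_A(\psi)$ if and only if it has a section (resp. a retraction) in $Com^{\mathscr C}$.
   Context: $K$ is a field. A $K$-coalgebra with several objects $\mathscr C$: a set $Ob(\mathscr C)$, vector spaces $\mathscr C(X,Y)$, linear comultiplications $\delta_{XYZ}:\mathscr C(X,Z)\to\mathscr C(Y,Z)\otimes\mathscr C(X,Y)$ and counits $\epsilon_X:\mathscr C(X,X)\to K$, with $(\delta_{YWZ}\otimes\mathrm{id})\delta_{XYZ}=(\mathrm{id}\otimes\delta_{XYW})\delta_{XWZ}$ and $(\epsilon_Y\otimes\mathrm{id})\delta_{XYY}=\mathrm{id}=(\mathrm{id}\otimes\epsilon_X)\delta_{XXY}$. For a $K$-algebra $A$ (multiplication $\mu_A$, unit $u_A$), an entwining structure $(\mathscr C,A,\psi)$ is a family of linear maps $\psi_{XY}:\mathscr C(X,Y)\otimes A\to A\otimes\mathscr C(X,Y)$, $\psi_{XY}(f\otimes a)=a_\psi\otimes f^\psi$, with (i) $(\mathrm{id}_A\otimes\delta_{XYZ})\psi_{XZ}=(\psi_{YZ}\otimes\mathrm{id})(\mathrm{id}\otimes\psi_{XY})(\delta_{XYZ}\otimes\mathrm{id}_A)$;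 (ii) $\psi_{XZ}(\mathrm{id}\otimes\mu_A)=(\mu_A\otimes\mathrm{id})(\mathrm{id}_A\otimes\psi_{XZ})(\psi_{XZ}\otimes\mathrm{id}_A)$; (iii) $\psi_{XZ}(f\otimes1)=1\otimes f$; (iv) $\epsilon_Z(g^\psi)a_\psi=\epsilon_Z(g)a$. $Com^{\mathscr C}$: right $\mathscr C$-comodules (spaces $\mathcal M(X)$, coactions $\rho_{XY}(m)=m_{Y0}\otimes m_{Y1}\in\mathcal M(Y)\otimes\mathscr C(X,Y)$ with $(\rho_{ZY}\otimes\mathrm{id})\rho_{XZ}=(\mathrm{id}\otimes\delta_{XZY})\rho_{XY}$, $(\mathrm{id}\otimes\epsilon_X)\rho_{XX}=\mathrm{id}$) with coaction-compatible morphisms. $Com^{\mathscr C}_A(\psi)$: comodules with right $A$-module structures on each $\mathcal M(X)$ such that $\rho_{XY}(ma)=m_{Y0}a_\psi\otimes(m_{Y1})^\psi$, with $A$-linear comodule morphisms. $coev_A:K\to A\otimes A^*$, $1\mapsto\sum_ia_i\otimes a_i^*$ (basis and dual basis). A normalized cointegral is a family of linear maps $\gamma_X:A^*\otimes\mathscr C(X,X)\to A$ with: (1) $(\mathrm{id}_A\otimes\psi_{XY})(\psi_{XY}\otimes\gamma_X)(\mathrm{id}\otimes coev_A\otimes\mathrm{id})\delta_{XXY}=(\mathrm{id}_A\otimes\gamma_Y\otimes\mathrm{id})(coev_A\otimes\delta_{XYY})$ as maps $\mathscr C(X,Y)\to A\otimes A\otimes\mathscr C(X,Y)$; (2) $(\mathrm{id}_A\otimes\mu_A)(\mathrm{id}_A\otimes\gamma_X\otimes\mathrm{id}_A)(coev_A\otimes\mathrm{id}\otimes\mathrm{id}_A)=(\mu_A\otimes\gamma_X)(\mathrm{id}_A\otimes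 coev_A\otimes\mathrm{id})\psi_{XX}$ as maps $\mathscr C(X,X)\otimes A\to A\otimes A$; (3) $\mu_A(\mathrm{id}_A\otimes\gamma_X)(coev_A\otimes\mathrm{id})=u_A\circ\epsilon_X$ on $\mathscr C(X,X)$. *)

theory Defs
  imports Main "HOL-Library.Poly_Mapping"
begin

text \<open>A K-vector space is encoded through a chosen basis: a basis set S of some
type 'b, the space being the finitely supported functions 'b =>0 K whose support
lies in S.  A linear map is encoded by its values on basis vectors (function
'b => ('c =>0 K)), extended linearly by app.  The tensor product of spaces with
bases S and T is the space with basis S x T; the ground field K is the space with
basis the unit type.\<close>

definition sm :: "'k::field \<Rightarrow> ('b \<Rightarrow>\<^sub>0 'k) \<Rightarrow> ('b \<Rightarrow>\<^sub>0 'k)" where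
  "sm c v = Poly_Mapping.map (\<lambda>x. c * x) v"

definition app :: "('b \<Rightarrow> ('c \<Rightarrow>\<^sub>0 'k::field)) \<Rightarrow> ('b \<Rightarrow>\<^sub>0 'k) \<Rightarrow> ('c \<Rightarrow>\<^sub>0 'k)" where
  "app f v = (\<Sum>b\<in>Poly_Mapping.keys v. sm (Poly_Mapping.lookup v b) (f b))"

definition cmp :: "('c \<Rightarrow> ('d \<Rightarrow>\<^sub>0 'k::field)) \<Rightarrow> ('b \<Rightarrow> ('c \<Rightarrow>\<^sub>0 'k)) \<Rightarrow> ('b \<Rightarrow> ('d \<Rightarrow>\<^sub>0 'k))"
  (infixr "\<odot>" 55) where
  "g \<odot> f = (\<lambda>b. app g (f b))"

definition idm :: "'b \<Rightarrow> ('b \<Rightarrow>\<^sub>0 'k::field)" where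
  "idm = (\<lambda>b. Poly_Mapping.single b 1)"

definition bmap :: "('b \<Rightarrow> 'c) \<Rightarrow> 'b \<Rightarrow> ('c \<Rightarrow>\<^sub>0 'k::field)" where
  "bmap p = (\<lambda>b. Poly_Mapping.single (p b) 1)"

definition tv :: "('a \<Rightarrow>\<^sub>0 'k::field) \<Rightarrow> ('b \<Rightarrow>\<^sub>0 'k) \<Rightarrow> ('a \<times> 'b \<Rightarrow>\<^sub>0 'k)" where
  "tv v w = (\<Sum>a\<in>Poly_Mapping.keys v. \<Sum>b\<in>Poly_Mapping.keys w. Poly_Mapping.single (a, b) (Poly_Mapping.lookup v a * Poly_Mapping.lookup w b))"

definition tm :: "('a \<Rightarrow> ('c \<Rightarrow>\<^sub>0 'k::field)) \<Rightarrow> ('b \<Rightarrow> ('d \<Rightarrow>\<^sub>0 'k)) \<Rightarrow> ('a \<times> 'b \<Rightarrow> ('c \<times> 'd \<Rightarrow>\<^sub>0 'k))" where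
  "tm f g = (\<lambda>(a, b). tv (f a) (g b))"

abbreviation assoc_lr :: "('a \<times> 'b) \<times> 'c \<Rightarrow> ('a \<times> ('b \<times> 'c) \<Rightarrow>\<^sub>0 'k::field)" where
  "assoc_lr \<equiv> bmap (\<lambda>((a, b), c). (a, (b, c)))"
abbreviation assoc_rl :: "'a \<times> ('b \<times> 'c) \<Rightarrow> (('a \<times> 'b) \<times> 'c \<Rightarrow>\<^sub>0 'k::field)" where
  "assoc_rl \<equiv> bmap (\<lambda>(a, (b, c)). ((a, b), c))"
abbreviation lunit :: "unit \<times> 'b \<Rightarrow> ('b \<Rightarrow>\<^sub>0 'k::field)" where
  "lunit \<equiv> bmap snd"
abbreviation runit :: "'b \<times> unit \<Rightarrow> ('b \<Rightarrow>\<^sub>0 'k::field)" where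
  "runit \<equiv> bmap fst"
abbreviation lunit_inv :: "'b \<Rightarrow> (unit \<times> 'b \<Rightarrow>\<^sub>0 'k::field)" where
  "lunit_inv \<equiv> bmap (\<lambda>b. ((), b))"
abbreviation runit_inv :: "'b \<Rightarrow> ('b \<times> unit \<Rightarrow>\<^sub>0 'k::field)" where
  "runit_inv \<equiv> bmap (\<lambda>b. (b, ()))"

definition maps_to :: "'b set \<Rightarrow> 'c set \<Rightarrow> ('b \<Rightarrow> ('c \<Rightarrow>\<^sub>0 'k::field)) \<Rightarrow> bool" where
  "maps_to S T f \<longleftrightarrow> (\<forall>b\<in>S. Poly_Mapping.keys (f b) \<subseteq> T)"

definition eq_on :: "'b set \<Rightarrow> ('b \<Rightarrow> ('c \<Rightarrow>\<^sub>0 'k::field)) \<Rightarrow> ('b \<Rightarrow> ('c \<Rightarrow>\<^sub>0 'k)) \<Rightarrow> bool" where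
  "eq_on S f g \<longleftrightarrow> (\<forall>b\<in>S. f b = g b)"

text \<open>Ob: set of objects; B X Y: basis of C(X,Y); dl X Y Z = delta_XYZ :
C(X,Z) -> C(Y,Z) (x) C(X,Y); ep X = epsilon_X : C(X,X) -> K.\<close>
definition coalg_several ::
  "'o set \<Rightarrow> ('o \<Rightarrow> 'o \<Rightarrow> 'c set) \<Rightarrow> ('o \<Rightarrow> 'o \<Rightarrow> 'o \<Rightarrow> 'c \<Rightarrow> ('c \<times> 'c \<Rightarrow>\<^sub>0 'k::field))
    \<Rightarrow> ('o \<Rightarrow> 'c \<Rightarrow> (unit \<Rightarrow>\<^sub>0 'k)) \<Rightarrow> bool" where
  "coalg_several Ob B dl ep \<longleftrightarrow>
     (\<forall>X\<in>Ob. \<forall>Y\<in>Ob. \<forall>Z\<in>Ob. maps_to (B X Z) (B Y Z \<times> B X Y) (dl X Y Z)) \<and>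
     (\<forall>X\<in>Ob. \<forall>Y\<in>Ob. \<forall>Z\<in>Ob. \<forall>W\<in>Ob.
        eq_on (B X Z) (tm (dl Y W Z) idm \<odot> dl X Y Z)
                      (assoc_rl \<odot> tm idm (dl X Y W) \<odot> dl X W Z)) \<and>
     (\<forall>X\<in>Ob. \<forall>Y\<in>Ob. eq_on (B X Y) (lunit \<odot> tm (ep Y) idm \<odot> dl X Y Y) idm) \<and>
     (\<forall>X\<in>Ob. \<forall>Y\<in>Ob. eq_on (B X Y) (runit \<odot> tm idm (ep X) \<odot> dl X X Y) idm)"

definition k_algebra ::
  "'a set \<Rightarrow> ('a \<times> 'a \<Rightarrow> ('a \<Rightarrow>\<^sub>0 'k::field)) \<Rightarrow> (unit \<Rightarrow> ('a \<Rightarrow>\<^sub>0 'k)) \<Rightarrow> bool" where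
  "k_algebra BA mu u \<longleftrightarrow>
     maps_to (BA \<times> BA) BA mu \<and> maps_to UNIV BA u \<and>
     eq_on ((BA \<times> BA) \<times> BA) (mu \<odot> tm mu idm) (mu \<odot> tm idm mu \<odot> assoc_lr) \<and>
     eq_on (UNIV \<times> BA) (mu \<odot> tm u idm) lunit \<and>
     eq_on (BA \<times> UNIV) (mu \<odot> tm idm u) runit"

text \<open>coev_A : K -> A (x) A*, 1 |-> sum_i a_i (x) a_i^*; the dual space A* is
encoded via the dual basis, indexed by the same basis set BA.\<close>
definition coev :: "'a set \<Rightarrow> unit \<Rightarrow> ('a \<times> 'a \<Rightarrow>\<^sub>0 'k::field)" where
  "coev BA = (\<lambda>_. \<Sum>a\<in>BA. Poly_Mapping.single (a, a) 1)"

definition entwining ::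
  "'o set \<Rightarrow> ('o \<Rightarrow> 'o \<Rightarrow> 'c set) \<Rightarrow> ('o \<Rightarrow> 'o \<Rightarrow> 'o \<Rightarrow> 'c \<Rightarrow> ('c \<times> 'c \<Rightarrow>\<^sub>0 'k::field))
    \<Rightarrow> ('o \<Rightarrow> 'c \<Rightarrow> (unit \<Rightarrow>\<^sub>0 'k))
    \<Rightarrow> 'a set \<Rightarrow> ('a \<times> 'a \<Rightarrow> ('a \<Rightarrow>\<^sub>0 'k)) \<Rightarrow> (unit \<Rightarrow> ('a \<Rightarrow>\<^sub>0 'k))
    \<Rightarrow> ('o \<Rightarrow> 'o \<Rightarrow> 'c \<times> 'a \<Rightarrow> ('a \<times> 'c \<Rightarrow>\<^sub>0 'k)) \<Rightarrow> bool" where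
  "entwining Ob B dl ep BA mu u psi \<longleftrightarrow>
     coalg_several Ob B dl ep \<and> k_algebra BA mu u \<and>
     (\<forall>X\<in>Ob. \<forall>Y\<in>Ob. maps_to (B X Y \<times> BA) (BA \<times> B X Y) (psi X Y)) \<and>
     \<comment> \<open>(i)\<close>
     (\<forall>X\<in>Ob. \<forall>Y\<in>Ob. \<forall>Z\<in>Ob.
        eq_on (B X Z \<times> BA) (tm idm (dl X Y Z) \<odot> psi X Z)
          (assoc_lr \<odot> tm (psi Y Z) idm \<odot> assoc_rl \<odot> tm idm (psi X Y) \<odot> assoc_lr
             \<odot> tm (dl X Y Z) idm)) \<and>
     \<comment> \<open>(ii)\<close>
     (\<forall>X\<in>Ob. \<forall>Z\<in>Ob.
        eq_on (B X Z \<times> (BA \<times> BA)) (psi X Z \<odot> tm idm mu)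
          (tm mu idm \<odot> assoc_rl \<odot> tm idm (psi X Z) \<odot> assoc_lr \<odot> tm (psi X Z) idm \<odot> assoc_rl)) \<and>
     \<comment> \<open>(iii)\<close>
     (\<forall>X\<in>Ob. \<forall>Z\<in>Ob.
        eq_on (B X Z) (psi X Z \<odot> tm idm u \<odot> runit_inv) (tm u idm \<odot> lunit_inv)) \<and>
     \<comment> \<open>(iv)\<close>
     (\<forall>Z\<in>Ob.
        eq_on (B Z Z \<times> BA) (runit \<odot> tm idm (ep Z) \<odot> psi Z Z) (lunit \<odot> tm (ep Z) idm))"

definition comodule ::
  "'o set \<Rightarrow> ('o \<Rightarrow> 'o \<Rightarrow> 'c set) \<Rightarrow> ('o \<Rightarrow> 'o \<Rightarrow> 'o \<Rightarrow> 'c \<Rightarrow> ('c \<times> 'c \<Rightarrow>\<^sub>0 'k::field))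
    \<Rightarrow> ('o \<Rightarrow> 'c \<Rightarrow> (unit \<Rightarrow>\<^sub>0 'k))
    \<Rightarrow> ('o \<Rightarrow> 'm set) \<Rightarrow> ('o \<Rightarrow> 'o \<Rightarrow> 'm \<Rightarrow> ('m \<times> 'c \<Rightarrow>\<^sub>0 'k)) \<Rightarrow> bool" where
  "comodule Ob B dl ep BM rho \<longleftrightarrow>
     (\<forall>X\<in>Ob. \<forall>Y\<in>Ob. maps_to (BM X) (BM Y \<times> B X Y) (rho X Y)) \<and>
     (\<forall>X\<in>Ob. \<forall>Y\<in>Ob. \<forall>Z\<in>Ob.
        eq_on (BM X) (tm (rho Z Y) idm \<odot> rho X Z) (assoc_rl \<odot> tm idm (dl X Z Y) \<odot> rho X Y)) \<and>
     (\<forall>X\<in>Ob. eq_on (BM X) (runit \<odot> tm idm (ep X) \<odot> rho X X) idm)"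

definition entwined_module ::
  "'o set \<Rightarrow> ('o \<Rightarrow> 'o \<Rightarrow> 'c set) \<Rightarrow> ('o \<Rightarrow> 'o \<Rightarrow> 'o \<Rightarrow> 'c \<Rightarrow> ('c \<times> 'c \<Rightarrow>\<^sub>0 'k::field))
    \<Rightarrow> ('o \<Rightarrow> 'c \<Rightarrow> (unit \<Rightarrow>\<^sub>0 'k))
    \<Rightarrow> 'a set \<Rightarrow> ('a \<times> 'a \<Rightarrow> ('a \<Rightarrow>\<^sub>0 'k)) \<Rightarrow> (unit \<Rightarrow> ('a \<Rightarrow>\<^sub>0 'k))
    \<Rightarrow> ('o \<Rightarrow> 'o \<Rightarrow> 'c \<times> 'a \<Rightarrow> ('a \<times> 'c \<Rightarrow>\<^sub>0 'k))
    \<Rightarrow> ('o \<Rightarrow> 'm set) \<Rightarrow> ('o \<Rightarrow> 'o \<Rightarrow> 'm \<Rightarrow> ('m \<times> 'c \<Rightarrow>\<^sub>0 'k))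
    \<Rightarrow> ('o \<Rightarrow> 'm \<times> 'a \<Rightarrow> ('m \<Rightarrow>\<^sub>0 'k)) \<Rightarrow> bool" where
  "entwined_module Ob B dl ep BA mu u psi BM rho act \<longleftrightarrow>
     comodule Ob B dl ep BM rho \<and>
     (\<forall>X\<in>Ob. maps_to (BM X \<times> BA) (BM X) (act X)) \<and>
     (\<forall>X\<in>Ob. eq_on ((BM X \<times> BA) \<times> BA) (act X \<odot> tm (act X) idm)
                                            (act X \<odot> tm idm mu \<odot> assoc_lr)) \<and>
     (\<forall>X\<in>Ob. eq_on (BM X) (act X \<odot> tm idm u \<odot> runit_inv) idm) \<and>
     (\<forall>X\<in>Ob. \<forall>Y\<in>Ob.
        eq_on (BM X \<times> BA) (rho X Y \<odot> act X)
          (tm (act Y) idm \<odot> assoc_rl \<odot> tm idm (psi X Y) \<odot> assoc_lr \<odot> tm (rho X Y) idm))"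

definition comodule_mor ::
  "'o set \<Rightarrow> ('o \<Rightarrow> 'o \<Rightarrow> 'c set)
    \<Rightarrow> ('o \<Rightarrow> 'm set) \<Rightarrow> ('o \<Rightarrow> 'o \<Rightarrow> 'm \<Rightarrow> ('m \<times> 'c \<Rightarrow>\<^sub>0 'k::field))
    \<Rightarrow> ('o \<Rightarrow> 'n set) \<Rightarrow> ('o \<Rightarrow> 'o \<Rightarrow> 'n \<Rightarrow> ('n \<times> 'c \<Rightarrow>\<^sub>0 'k))
    \<Rightarrow> ('o \<Rightarrow> 'm \<Rightarrow> ('n \<Rightarrow>\<^sub>0 'k)) \<Rightarrow> bool" where
  "comodule_mor Ob B BM rho BN rho' phi \<longleftrightarrow>
     (\<forall>X\<in>Ob. maps_to (BM X) (BN X) (phi X)) \<and>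
     (\<forall>X\<in>Ob. \<forall>Y\<in>Ob. eq_on (BM X) (tm (phi Y) idm \<odot> rho X Y) (rho' X Y \<odot> phi X))"

definition entwined_mor ::
  "'o set \<Rightarrow> ('o \<Rightarrow> 'o \<Rightarrow> 'c set) \<Rightarrow> 'a set
    \<Rightarrow> ('o \<Rightarrow> 'm set) \<Rightarrow> ('o \<Rightarrow> 'o \<Rightarrow> 'm \<Rightarrow> ('m \<times> 'c \<Rightarrow>\<^sub>0 'k::field)) \<Rightarrow> ('o \<Rightarrow> 'm \<times> 'a \<Rightarrow> ('m \<Rightarrow>\<^sub>0 'k))
    \<Rightarrow> ('o \<Rightarrow> 'n set) \<Rightarrow> ('o \<Rightarrow> 'o \<Rightarrow> 'n \<Rightarrow> ('n \<times> 'c \<Rightarrow>\<^sub>0 'k)) \<Rightarrow> ('o \<Rightarrow> 'n \<times> 'a \<Rightarrow> ('n \<Rightarrow>\<^sub>0 'k))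
    \<Rightarrow> ('o \<Rightarrow> 'm \<Rightarrow> ('n \<Rightarrow>\<^sub>0 'k)) \<Rightarrow> bool" where
  "entwined_mor Ob B BA BM rho act BN rho' act' phi \<longleftrightarrow>
     comodule_mor Ob B BM rho BN rho' phi \<and>
     (\<forall>X\<in>Ob. eq_on (BM X \<times> BA) (phi X \<odot> act X) (act' X \<odot> tm (phi X) idm))"

definition is_section_of ::
  "'o set \<Rightarrow> ('o \<Rightarrow> 'n set) \<Rightarrow> ('o \<Rightarrow> 'n \<Rightarrow> ('m \<Rightarrow>\<^sub>0 'k::field)) \<Rightarrow> ('o \<Rightarrow> 'm \<Rightarrow> ('n \<Rightarrow>\<^sub>0 'k)) \<Rightarrow> bool" where
  "is_section_of Ob BN sigma phi \<longleftrightarrow> (\<forall>X\<in>Ob. eq_on (BN X) (phi X \<odot> sigma X) idm)"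

definition is_retraction_of ::
  "'o set \<Rightarrow> ('o \<Rightarrow> 'm set) \<Rightarrow> ('o \<Rightarrow> 'n \<Rightarrow> ('m \<Rightarrow>\<^sub>0 'k::field)) \<Rightarrow> ('o \<Rightarrow> 'm \<Rightarrow> ('n \<Rightarrow>\<^sub>0 'k)) \<Rightarrow> bool" where
  "is_retraction_of Ob BM rho phi \<longleftrightarrow> (\<forall>X\<in>Ob. eq_on (BM X) (rho X \<odot> phi X) idm)"

text \<open>gm X = gamma_X : A* (x) C(X,X) -> A\<close>
definition normalized_cointegral ::
  "'o set \<Rightarrow> ('o \<Rightarrow> 'o \<Rightarrow> 'c set) \<Rightarrow> ('o \<Rightarrow> 'o \<Rightarrow> 'o \<Rightarrow> 'c \<Rightarrow> ('c \<times> 'c \<Rightarrow>\<^sub>0 'k::field))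
    \<Rightarrow> ('o \<Rightarrow> 'c \<Rightarrow> (unit \<Rightarrow>\<^sub>0 'k))
    \<Rightarrow> 'a set \<Rightarrow> ('a \<times> 'a \<Rightarrow> ('a \<Rightarrow>\<^sub>0 'k)) \<Rightarrow> (unit \<Rightarrow> ('a \<Rightarrow>\<^sub>0 'k))
    \<Rightarrow> ('o \<Rightarrow> 'o \<Rightarrow> 'c \<times> 'a \<Rightarrow> ('a \<times> 'c \<Rightarrow>\<^sub>0 'k))
    \<Rightarrow> ('o \<Rightarrow> 'a \<times> 'c \<Rightarrow> ('a \<Rightarrow>\<^sub>0 'k)) \<Rightarrow> bool" where
  "normalized_cointegral Ob B dl ep BA mu u psi gm \<longleftrightarrow>
     (\<forall>X\<in>Ob. maps_to (BA \<times> B X X) BA (gm X)) \<and>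
     \<comment> \<open>(1)\<close>
     (\<forall>X\<in>Ob. \<forall>Y\<in>Ob.
        eq_on (B X Y)
          (tm idm (psi X Y) \<odot> bmap (\<lambda>((a, c), b). (a, (c, b))) \<odot> tm (psi X Y) (gm X)
             \<odot> bmap (\<lambda>((c, (a, b)), d). ((c, a), (b, d)))
             \<odot> tm (tm idm (coev BA) \<odot> runit_inv) idm \<odot> dl X X Y)
          (tm idm (tm (gm Y) idm) \<odot> bmap (\<lambda>((a, b), (c, d)). (a, ((b, c), d)))
             \<odot> tm (coev BA) (dl X Y Y) \<odot> lunit_inv)) \<and>
     \<comment> \<open>(2)\<close>
     (\<forall>X\<in>Ob.
        eq_on (B X X \<times> BA)
          (tm idm mu \<odot> tm idm (tm (gm X) idm) \<odot> bmap (\<lambda>((a, b), (c, d)). (a, ((b, c), d)))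
             \<odot> tm (coev BA) idm \<odot> lunit_inv)
          (tm mu (gm X) \<odot> bmap (\<lambda>(a, ((b, d), c)). ((a, b), (d, c)))
             \<odot> tm idm (tm (coev BA) idm) \<odot> bmap (\<lambda>(a, c). (a, ((), c))) \<odot> psi X X)) \<and>
     \<comment> \<open>(3)\<close>
     (\<forall>X\<in>Ob.
        eq_on (B X X)
          (mu \<odot> tm idm (gm X) \<odot> assoc_lr \<odot> tm (coev BA) idm \<odot> lunit_inv)
          (u \<odot> ep X))"

end

theory Submission
  imports Defs
begin


lemma lookup_sm[simp]: "Poly_Mapping.lookup (sm c v) x = c * Poly_Mapping.lookup v x"
  by (simp add: sm_def Poly_Mapping.map.rep_eq when_def)

lemma keys_sm: "Poly_Mapping.keys (sm c v) \<subseteq> Poly_Mapping.keys v"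
  by (auto simp: in_keys_iff)

lemma lookup_app: "Poly_Mapping.lookup (app f v) x =
    (\<Sum>b\<in>Poly_Mapping.keys v. Poly_Mapping.lookup v b * Poly_Mapping.lookup (f b) x)"
  by (simp add: app_def lookup_sum)

lemma lookup_app_superset:
  assumes "finite S" "Poly_Mapping.keys v \<subseteq> S"
  shows "Poly_Mapping.lookup (app f v) x =
    (\<Sum>b\<in>S. Poly_Mapping.lookup v b * Poly_Mapping.lookup (f b) x)"
  unfolding lookup_app
  by (rule sum.mono_neutral_left) (use assms in \<open>auto simp: in_keys_iff\<close>)

lemma app_add: "app f (v + w) = app f v + app f w"
proof (rule poly_mapping_eqI)
  fix x
  let ?S = "Poly_Mapping.keys v \<union> Poly_Mapping.keys w"
  have k: "Poly_Mapping.keys (v + w) \<subseteq> ?S" by (rule keys_add)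
  show "Poly_Mapping.lookup (app f (v + w)) x = Poly_Mapping.lookup (app f v + app f w) x"
    by (simp add: lookup_add lookup_app_superset[OF _ k] lookup_app_superset[of ?S v]
        lookup_app_superset[of ?S w] sum.distrib distrib_right)
qed

lemma app_sm: "app f (sm c v) = sm c (app f v)"
proof (rule poly_mapping_eqI)
  fix x
  show "Poly_Mapping.lookup (app f (sm c v)) x = Poly_Mapping.lookup (sm c (app f v)) x"
  proof -
    have "Poly_Mapping.lookup (app f (sm c v)) x = (\<Sum>b\<in>Poly_Mapping.keys v. Poly_Mapping.lookup (sm c v) b * Poly_Mapping.lookup (f b) x)"
      by (rule lookup_app_superset[OF _ keys_sm]) simp
    then show ?thesis by (simp add: lookup_app sum_distrib_left mult.assoc)
  qed
qed

lemma app_zero[simp]: "app f 0 = 0"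
  by (simp add: app_def)

lemma app_single: "app f (Poly_Mapping.single b c) = sm c (f b)"
proof (rule poly_mapping_eqI)
  fix x
  show "Poly_Mapping.lookup (app f (Poly_Mapping.single b c)) x = Poly_Mapping.lookup (sm c (f b)) x"
    by (subst lookup_app_superset[of "{b}"]) (auto simp: lookup_single)
qed

lemma sm_one[simp]: "sm 1 v = v"
  by (rule poly_mapping_eqI) simp

lemma sm_zero[simp]: "sm 0 v = 0"
  by (rule poly_mapping_eqI) simp

lemma app_single1[simp]: "app f (Poly_Mapping.single b 1) = f b"
  by (simp add: app_single)

lemma app_sum: "app f (sum g S) = (\<Sum>s\<in>S. app f (g s))"
  by (induction S rule: infinite_finite_induct) (auto simp: app_add)

lemma app_eq_sum: "app f v = (\<Sum>b\<in>Poly_Mapping.keys v. sm (Poly_Mapping.lookup v b) (f b))"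
  by (simp add: app_def)

lemma app_cmp: "app (g \<odot> f) v = app g (app f v)"
proof -
  have "app (g \<odot> f) v = (\<Sum>b\<in>Poly_Mapping.keys v. sm (Poly_Mapping.lookup v b) (app g (f b)))"
    by (unfold app_def[of "g \<odot> f" v]) (simp add: cmp_def)
  also have "\<dots> = app g (app f v)"
    by (simp add: app_def[of f] app_sum app_sm)
  finally show ?thesis .
qed

lemma cmp_apply: "(g \<odot> f) b = app g (f b)"
  by (simp add: cmp_def)

lemma cmp_assoc: "(h \<odot> g) \<odot> f = h \<odot> (g \<odot> f)"
  by (rule ext) (simp only: cmp_apply app_cmp)

lemma app_idm[simp]: "app idm v = v"
proof (rule poly_mapping_eqI)
  fix x
  show "Poly_Mapping.lookup (app idm v) x = Poly_Mapping.lookup v x"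
    by (simp add: lookup_app idm_def lookup_single when_def in_keys_iff if_distrib sum.delta cong: if_cong)
qed

lemma cmp_idm[simp]: "f \<odot> idm = f"
  by (simp add: cmp_def idm_def fun_eq_iff)

lemma idm_cmp[simp]: "idm \<odot> f = f"
  by (simp add: cmp_def fun_eq_iff)

lemma sum_sum_delta:
  assumes "finite A" "finite B"
  shows "(\<Sum>a'\<in>A. \<Sum>b'\<in>B. if a' = a \<and> b' = b then X a' b' else 0) = (if a \<in> A \<and> b \<in> B then X a b else 0)"
proof -
  have "(\<Sum>a'\<in>A. \<Sum>b'\<in>B. if a' = a \<and> b' = b then X a' b' else 0) =
     (\<Sum>a'\<in>A. if a' = a then (\<Sum>b'\<in>B. if b' = b then X a b' else 0) else 0)"
    by (rule sum.cong) auto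
  also have "\<dots> = (if a \<in> A \<and> b \<in> B then X a b else 0)"
    using assms by (simp add: sum.delta)
  finally show ?thesis .
qed

lemma lookup_tv: "Poly_Mapping.lookup (tv v w) (a, b) = Poly_Mapping.lookup v a * Poly_Mapping.lookup w b"
proof -
  have "Poly_Mapping.lookup (tv v w) (a, b) =
     (\<Sum>a'\<in>Poly_Mapping.keys v. \<Sum>b'\<in>Poly_Mapping.keys w.
        (Poly_Mapping.lookup v a' * Poly_Mapping.lookup w b' when (a', b') = (a, b)))"
    by (simp add: tv_def lookup_sum lookup_single)
  also have "\<dots> = Poly_Mapping.lookup v a * Poly_Mapping.lookup w b"
    by (cases "a \<in> Poly_Mapping.keys v"; cases "b \<in> Poly_Mapping.keys w")
       (auto simp: when_def in_keys_iff sum_sum_delta)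
  finally show ?thesis .
qed

lemma keys_tv: "Poly_Mapping.keys (tv v w) \<subseteq> Poly_Mapping.keys v \<times> Poly_Mapping.keys w"
  by (auto simp: in_keys_iff lookup_tv)

lemma tv_single_single[simp]: "tv (Poly_Mapping.single a c) (Poly_Mapping.single b d) = Poly_Mapping.single (a, b) (c * d)"
  by (rule poly_mapping_eqI) (auto simp: lookup_tv lookup_single when_def split: if_splits)

lemma tm_apply: "tm f g (a, b) = tv (f a) (g b)"
  by (simp add: tm_def)

lemma app_tm_tv: "app (tm f g) (tv v w) = tv (app f v) (app g w)"
proof (rule poly_mapping_eqI)
  fix x :: "'a \<times> 'b"
  obtain c d where x: "x = (c, d)" by (cases x)
  have "Poly_Mapping.lookup (app (tm f g) (tv v w)) (c, d) =
     (\<Sum>k\<in>Poly_Mapping.keys v \<times> Poly_Mapping.keys w. Poly_Mapping.lookup (tv v w) k * Poly_Mapping.lookup (tm f g k) (c, d))"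
    by (rule lookup_app_superset[OF _ keys_tv]) simp
  also have "\<dots> = (\<Sum>(a,b)\<in>Poly_Mapping.keys v \<times> Poly_Mapping.keys w.
       (Poly_Mapping.lookup v a * Poly_Mapping.lookup (f a) c) * (Poly_Mapping.lookup w b * Poly_Mapping.lookup (g b) d))"
    by (rule sum.cong) (auto simp: lookup_tv tm_apply mult_ac)
  also have "\<dots> = (\<Sum>a\<in>Poly_Mapping.keys v. \<Sum>b\<in>Poly_Mapping.keys w.
       (Poly_Mapping.lookup v a * Poly_Mapping.lookup (f a) c) * (Poly_Mapping.lookup w b * Poly_Mapping.lookup (g b) d))"
    by (simp add: sum.cartesian_product)
  also have "\<dots> = Poly_Mapping.lookup (tv (app f v) (app g w)) (c, d)"
    by (simp add: lookup_tv lookup_app sum_product mult_ac)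
  finally show "Poly_Mapping.lookup (app (tm f g) (tv v w)) x = Poly_Mapping.lookup (tv (app f v) (app g w)) x"
    by (simp add: x)
qed

lemma tm_cmp: "tm f1 g1 \<odot> tm f2 g2 = tm (f1 \<odot> f2) (g1 \<odot> g2)"
  apply (rule ext) subgoal for x by (cases x) (simp add: cmp_apply tm_apply app_tm_tv) done

lemma tm_cmp_r: "tm f1 g1 \<odot> (tm f2 g2 \<odot> h) = tm (f1 \<odot> f2) (g1 \<odot> g2) \<odot> h"
  by (simp add: tm_cmp flip: cmp_assoc)

lemma tm_idm[simp]: "tm idm idm = idm"
  by (simp add: fun_eq_iff idm_def tm_def)

lemma lookup_app_bmap_inj:
  assumes "inj p"
  shows "Poly_Mapping.lookup (app (bmap p) v) (p k) = Poly_Mapping.lookup v k"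
proof -
  have "Poly_Mapping.lookup (app (bmap p) v) (p k) =
     (\<Sum>b\<in>Poly_Mapping.keys v. Poly_Mapping.lookup v b * (1 when p b = p k))"
    by (simp add: lookup_app bmap_def lookup_single)
  also have "\<dots> = (\<Sum>b\<in>Poly_Mapping.keys v. if b = k then Poly_Mapping.lookup v b else 0)"
    using injD[OF assms] by (intro sum.cong) (auto simp: when_def)
  also have "\<dots> = Poly_Mapping.lookup v k"
    by (simp add: in_keys_iff)
  finally show ?thesis .
qed

lemma bmap_apply: "bmap p b = Poly_Mapping.single (p b) 1"
  by (simp add: bmap_def)

lemma idm_apply: "idm b = Poly_Mapping.single b 1"
  by (simp add: idm_def)

lemma bmap_cmp: "bmap q \<odot> bmap p = bmap (q \<circ> p)"
  by (rule ext) (simp add: cmp_apply bmap_apply)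

lemma bmap_cmp_r: "bmap q \<odot> (bmap p \<odot> h) = bmap (q \<circ> p) \<odot> h"
  by (simp add: bmap_cmp flip: cmp_assoc)

lemma idm_bmap: "idm = bmap id"
  by (simp add: idm_def bmap_def fun_eq_iff)

lemma tm_bmap: "tm (bmap p) (bmap q) = bmap (map_prod p q)"
  by (rule ext) (auto simp: tm_def bmap_apply)

lemma app_bmap_eqI:
  assumes "inj p" "\<And>k. Poly_Mapping.lookup W (p k) = Poly_Mapping.lookup V k" "surj p"
  shows "app (bmap p) V = W"
proof (rule poly_mapping_eqI)
  fix y
  obtain k where "y = p k" using assms(3) by blast
  then show "Poly_Mapping.lookup (app (bmap p) V) y = Poly_Mapping.lookup W y"
    using lookup_app_bmap_inj[OF assms(1)] assms(2) by simp
qed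

lemma app_assoc_lr_tv: "app assoc_lr (tv (tv x y) z) = tv x (tv y z)"
  by (rule app_bmap_eqI) (auto simp: inj_def lookup_tv surj_def)

lemma app_assoc_rl_tv: "app assoc_rl (tv x (tv y z)) = tv (tv x y) z"
  by (rule app_bmap_eqI) (auto simp: inj_def lookup_tv surj_def)

lemma app_lunit_inv: "app lunit_inv v = tv (Poly_Mapping.single () 1) v"
  by (rule app_bmap_eqI) (auto simp: inj_def lookup_tv surj_def)

lemma app_runit_inv: "app runit_inv v = tv v (Poly_Mapping.single () 1)"
  by (rule app_bmap_eqI) (auto simp: inj_def lookup_tv surj_def)

lemma app_lunit_tv: "app lunit (tv x y) = sm (Poly_Mapping.lookup x ()) y"
  by (rule app_bmap_eqI) (auto simp: inj_def lookup_tv surj_def)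

lemma app_runit_tv: "app runit (tv y x) = sm (Poly_Mapping.lookup x ()) y"
  by (rule app_bmap_eqI) (auto simp: inj_def lookup_tv surj_def)

lemma N_lr: "assoc_lr \<odot> tm (tm f g) h = tm f (tm g h) \<odot> assoc_lr"
  by (rule ext) (auto simp: cmp_apply bmap_apply tm_apply app_assoc_lr_tv)

lemma N_rl: "assoc_rl \<odot> tm f (tm g h) = tm (tm f g) h \<odot> assoc_rl"
  by (rule ext) (auto simp: cmp_apply bmap_apply tm_apply app_assoc_rl_tv)

lemma lr_rl: "assoc_lr \<odot> assoc_rl = idm"
  by (simp add: bmap_cmp idm_bmap comp_def case_prod_beta id_def)

lemma rl_lr: "assoc_rl \<odot> assoc_lr = idm"
  by (simp add: bmap_cmp idm_bmap comp_def case_prod_beta id_def)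

lemma runit_tm: "runit \<odot> tm f (idm :: unit \<Rightarrow> _) = f \<odot> runit"
  by (rule ext) (auto simp: cmp_apply bmap_apply tm_apply idm_apply app_runit_tv)

lemma lunit_tm: "lunit \<odot> tm (idm :: unit \<Rightarrow> _) f = f \<odot> lunit"
  by (rule ext) (auto simp: cmp_apply bmap_apply tm_apply idm_apply app_lunit_tv)

lemma lunit_inv_nat: "lunit_inv \<odot> f = tm idm f \<odot> lunit_inv"
  by (rule ext) (auto simp: cmp_apply bmap_apply tm_apply idm_apply app_lunit_inv)

lemma runit_inv_nat: "runit_inv \<odot> f = tm f idm \<odot> runit_inv"
  by (rule ext) (auto simp: cmp_apply bmap_apply tm_apply idm_apply app_runit_inv)

lemma runit_inv_runit: "runit_inv \<odot> (runit :: 'b \<times> unit \<Rightarrow> _) = idm"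
proof -
  have "(\<lambda>x::'b \<times> unit. (fst x, ())) = id" by (auto simp: fun_eq_iff)
  then show ?thesis by (simp add: bmap_cmp idm_bmap comp_def)
qed

lemma lookup_tv_pair: "Poly_Mapping.lookup (tv v w) k = Poly_Mapping.lookup v (fst k) * Poly_Mapping.lookup w (snd k)"
  by (cases k) (simp add: lookup_tv)

lemma tv_sum_left: "tv (sum g S) w = (\<Sum>s\<in>S. tv (g s) w)"
  by (rule poly_mapping_eqI) (simp add: lookup_tv_pair lookup_sum sum_distrib_right)

lemma tv_sum_right: "tv w (sum g S) = (\<Sum>s\<in>S. tv w (g s))"
  by (rule poly_mapping_eqI) (simp add: lookup_tv_pair lookup_sum sum_distrib_left)

lemma coev_apply: "coev BA x = (\<Sum>a\<in>BA. Poly_Mapping.single (a, a) 1)"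
  by (simp add: coev_def)

lemma lr_rl_r: "assoc_lr \<odot> (assoc_rl \<odot> h) = h"
  by (simp add: lr_rl flip: cmp_assoc)
lemma rl_lr_r: "assoc_rl \<odot> (assoc_lr \<odot> h) = h"
  by (simp add: rl_lr flip: cmp_assoc)
lemma N_lr_r: "assoc_lr \<odot> (tm (tm f g) h \<odot> r) = tm f (tm g h) \<odot> (assoc_lr \<odot> r)"
  by (simp add: N_lr flip: cmp_assoc)
lemma N_rl_r: "assoc_rl \<odot> (tm f (tm g h) \<odot> r) = tm (tm f g) h \<odot> (assoc_rl \<odot> r)"
  by (simp add: N_rl flip: cmp_assoc)
lemma runit_inv_runit_r: "runit_inv \<odot> ((runit :: 'b \<times> unit \<Rightarrow> _) \<odot> h) = h"
  by (simp add: runit_inv_runit flip: cmp_assoc)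

lemma keys_app: "Poly_Mapping.keys (app f v) \<subseteq> (\<Union>b\<in>Poly_Mapping.keys v. Poly_Mapping.keys (f b))"
proof
  fix x assume x: "x \<in> Poly_Mapping.keys (app f v)"
  show "x \<in> (\<Union>b\<in>Poly_Mapping.keys v. Poly_Mapping.keys (f b))"
  proof (rule ccontr)
    assume "x \<notin> (\<Union>b\<in>Poly_Mapping.keys v. Poly_Mapping.keys (f b))"
    then have "Poly_Mapping.lookup (app f v) x = 0"
      by (auto simp: lookup_app in_keys_iff intro!: sum.neutral)
    with x show False by (simp add: in_keys_iff)
  qed
qed

lemma maps_to_app: "maps_to S T f \<Longrightarrow> Poly_Mapping.keys v \<subseteq> S \<Longrightarrow> Poly_Mapping.keys (app f v) \<subseteq> T"
  using keys_app[of f v] unfolding maps_to_def by blast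

lemma maps_to_cmp: "maps_to S T f \<Longrightarrow> maps_to T U g \<Longrightarrow> maps_to S U (g \<odot> f)"
  unfolding maps_to_def cmp_apply
proof
  fix b assume "\<forall>b\<in>S. Poly_Mapping.keys (f b) \<subseteq> T" "\<forall>b\<in>T. Poly_Mapping.keys (g b) \<subseteq> U" "b \<in> S"
  then show "Poly_Mapping.keys (app g (f b)) \<subseteq> U"
    using maps_to_app[of T U g "f b"] by (simp add: maps_to_def)
qed

lemma maps_to_tm: "maps_to S T f \<Longrightarrow> maps_to S' T' g \<Longrightarrow> maps_to (S \<times> S') (T \<times> T') (tm f g)"
  unfolding maps_to_def
proof
  fix k assume a: "\<forall>b\<in>S. Poly_Mapping.keys (f b) \<subseteq> T" "\<forall>b\<in>S'. Poly_Mapping.keys (g b) \<subseteq> T'" "k \<in> S \<times> S'"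
  then obtain a b where k: "k = (a, b)" "a \<in> S" "b \<in> S'" by blast
  show "Poly_Mapping.keys (tm f g k) \<subseteq> T \<times> T'"
  proof -
    have "Poly_Mapping.keys (f a) \<subseteq> T" "Poly_Mapping.keys (g b) \<subseteq> T'" using a k by auto
    then show ?thesis using keys_tv[of "f a" "g b"] k by (auto simp: tm_apply)
  qed
qed

lemma maps_to_idm: "maps_to S S idm"
  by (simp add: maps_to_def idm_apply)

lemma maps_to_UNIV: "maps_to S UNIV f"
  by (simp add: maps_to_def)

lemma maps_to_mono: "maps_to S T f \<Longrightarrow> T \<subseteq> T' \<Longrightarrow> maps_to S T' f"
  by (auto simp: maps_to_def)

lemma maps_to_mono_dom: "maps_to S T f \<Longrightarrow> S' \<subseteq> S \<Longrightarrow> maps_to S' T f"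
  by (auto simp: maps_to_def)

lemma maps_to_assoc_lr: "maps_to ((A \<times> B) \<times> C) (A \<times> (B \<times> C)) assoc_lr"
  by (auto simp: maps_to_def bmap_apply)

lemma maps_to_assoc_rl: "maps_to (A \<times> (B \<times> C)) ((A \<times> B) \<times> C) assoc_rl"
  by (auto simp: maps_to_def bmap_apply)

lemma maps_to_lunit_inv: "maps_to A (UNIV \<times> A) lunit_inv"
  by (auto simp: maps_to_def bmap_apply)

lemma maps_to_runit_inv: "maps_to A (A \<times> UNIV) runit_inv"
  by (auto simp: maps_to_def bmap_apply)

lemma maps_to_lunit: "maps_to (U \<times> A) A lunit"
  by (auto simp: maps_to_def bmap_apply)

lemma maps_to_runit: "maps_to (A \<times> U) A runit"
  by (auto simp: maps_to_def bmap_apply)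

lemma eq_on_app: "eq_on S f g \<Longrightarrow> Poly_Mapping.keys v \<subseteq> S \<Longrightarrow> app f v = app g v"
  unfolding app_def eq_on_def by (intro sum.cong) auto

lemma eq_on_cmpR: "eq_on T f g \<Longrightarrow> maps_to S T h \<Longrightarrow> eq_on S (f \<odot> h) (g \<odot> h)"
  unfolding eq_on_def[of S] cmp_apply
proof
  fix b assume "eq_on T f g" "maps_to S T h" "b \<in> S"
  then show "app f (h b) = app g (h b)" by (intro eq_on_app) (auto simp: maps_to_def)
qed

lemma eq_on_cmpL: "eq_on S f g \<Longrightarrow> eq_on S (h \<odot> f) (h \<odot> g)"
  by (auto simp: eq_on_def cmp_apply)

lemma eq_on_tm: "eq_on S f f' \<Longrightarrow> eq_on T g g' \<Longrightarrow> eq_on (S \<times> T) (tm f g) (tm f' g')"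
  by (auto simp: eq_on_def tm_apply)

lemma eq_on_refl: "eq_on S f f"
  by (simp add: eq_on_def)

lemma eq_on_sym: "eq_on S f g \<Longrightarrow> eq_on S g f"
  by (simp add: eq_on_def)

lemma eq_on_trans: "eq_on S f g \<Longrightarrow> eq_on S g h \<Longrightarrow> eq_on S f h"
  by (simp add: eq_on_def)

lemma eq_on_eq: "f = g \<Longrightarrow> eq_on S f g"
  by (simp add: eq_on_def)

lemma eq_on_mono: "eq_on S f g \<Longrightarrow> S' \<subseteq> S \<Longrightarrow> eq_on S' f g"
  by (auto simp: eq_on_def)



lemma swap_r: "tm idm g \<odot> (tm f idm \<odot> r) = tm f idm \<odot> (tm idm g \<odot> r)"
  by (simp add: tm_cmp_r)
lemma swap: "tm idm g \<odot> tm f idm = tm f idm \<odot> tm idm g"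
  by (simp add: tm_cmp)
lemma tmL_r: "tm f idm \<odot> (tm g idm \<odot> r) = tm (f \<odot> g) idm \<odot> r"
  by (simp add: tm_cmp_r)
lemma tmR_r: "tm idm f \<odot> (tm idm g \<odot> r) = tm idm (f \<odot> g) \<odot> r"
  by (simp add: tm_cmp_r)
lemma tmL: "tm (f \<odot> g) idm = tm f idm \<odot> tm g idm"
  by (simp add: tm_cmp)
lemma tmR: "tm idm (f \<odot> g) = tm idm f \<odot> tm idm g"
  by (simp add: tm_cmp)
lemma N_rl_idm_r: "assoc_rl \<odot> (tm f idm \<odot> r) = tm (tm f idm) idm \<odot> (assoc_rl \<odot> r)"
  using N_rl_r[of f idm idm r] by simp
lemma N_lr_idm_r: "assoc_lr \<odot> (tm idm h \<odot> r) = tm idm (tm idm h) \<odot> (assoc_lr \<odot> r)"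
  using N_lr_r[of idm idm h r] by simp
lemma N_lr_idmL_r: "assoc_lr \<odot> (tm (tm f idm) idm \<odot> r) = tm f idm \<odot> (assoc_lr \<odot> r)"
  using N_lr_r[of f idm idm r] by simp
lemma N_rl_idmR_r: "assoc_rl \<odot> (tm idm (tm idm h) \<odot> r) = tm idm h \<odot> (assoc_rl \<odot> r)"
  using N_rl_r[of idm idm h r] by simp

lemmas ev_simps = cmp_apply bmap_apply tm_apply idm_apply app_tm_tv app_assoc_rl_tv app_assoc_lr_tv

lemma GM1_K: "tm (F \<odot> tm idm m \<odot> assoc_lr) idm \<odot> assoc_rl \<odot> assoc_rl
   = tm F idm \<odot> assoc_rl \<odot> tm idm (tm m idm) \<odot> tm idm assoc_rl"
  by (rule ext) (clarsimp simp: split_paired_all ev_simps)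

lemma GM1: "tm (F \<odot> tm idm m \<odot> assoc_lr) idm \<odot> assoc_rl \<odot> tm idm d \<odot> assoc_rl \<odot> tm idm p \<odot> r
   = tm F idm \<odot> assoc_rl \<odot> tm idm (tm m idm \<odot> assoc_rl \<odot> tm idm d \<odot> p) \<odot> r"
proof -
  have "tm (F \<odot> tm idm m \<odot> assoc_lr) idm \<odot> assoc_rl \<odot> tm idm d \<odot> assoc_rl \<odot> tm idm p \<odot> r
     = (tm (F \<odot> tm idm m \<odot> assoc_lr) idm \<odot> assoc_rl \<odot> assoc_rl) \<odot> tm idm (tm idm d) \<odot> tm idm p \<odot> r"
    by (simp only: cmp_assoc N_rl_idmR_r)
  also have "\<dots> = (tm F idm \<odot> assoc_rl \<odot> tm idm (tm m idm) \<odot> tm idm assoc_rl) \<odot> tm idm (tm idm d) \<odot> tm idm p \<odot> r"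
    by (simp only: GM1_K)
  also have "\<dots> = tm F idm \<odot> assoc_rl \<odot> tm idm (tm m idm \<odot> assoc_rl \<odot> tm idm d \<odot> p) \<odot> r"
    by (simp only: cmp_assoc tmR)
  finally show ?thesis .
qed

lemma GM2_K: "tm F idm \<odot> assoc_rl \<odot> tm idm (tm idm m \<odot> assoc_lr) \<odot> assoc_lr
   = tm F idm \<odot> tm idm m \<odot> assoc_lr \<odot> tm assoc_rl idm"
  by (rule ext) (clarsimp simp: split_paired_all ev_simps)

lemma GM2: "tm F idm \<odot> assoc_rl \<odot> tm idm (tm idm m \<odot> assoc_lr \<odot> tm d idm) \<odot> assoc_lr \<odot> r
   = tm F idm \<odot> tm idm m \<odot> assoc_lr \<odot> tm assoc_rl idm \<odot> tm (tm idm d) idm \<odot> r"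
proof -
  have "tm F idm \<odot> assoc_rl \<odot> tm idm (tm idm m \<odot> assoc_lr \<odot> tm d idm) \<odot> assoc_lr \<odot> r
     = (tm F idm \<odot> assoc_rl \<odot> tm idm (tm idm m \<odot> assoc_lr) \<odot> assoc_lr) \<odot> tm (tm idm d) idm \<odot> r"
    by (simp only: cmp_assoc tmR N_lr_r[symmetric] tm_idm)
  also have "\<dots> = tm F idm \<odot> tm idm m \<odot> assoc_lr \<odot> tm assoc_rl idm \<odot> tm (tm idm d) idm \<odot> r"
    by (simp only: GM2_K cmp_assoc)
  finally show ?thesis .
qed

lemma GM3_K: "tm assoc_rl idm \<odot> assoc_rl = assoc_rl \<odot> assoc_rl \<odot> tm idm assoc_lr"
  by (rule ext) (clarsimp simp: split_paired_all ev_simps)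

lemma GM3: "tm (Q \<odot> assoc_rl \<odot> tm idm d) idm \<odot> assoc_rl \<odot> tm idm e \<odot> r
   = tm Q idm \<odot> assoc_rl \<odot> assoc_rl \<odot> tm idm (assoc_lr \<odot> tm d idm \<odot> e) \<odot> r"
proof -
  have "tm (Q \<odot> assoc_rl \<odot> tm idm d) idm \<odot> assoc_rl \<odot> tm idm e \<odot> r
     = tm Q idm \<odot> (tm assoc_rl idm \<odot> assoc_rl) \<odot> tm idm (tm d idm) \<odot> tm idm e \<odot> r"
    by (simp only: cmp_assoc tmL N_rl_r[symmetric])
  also have "\<dots> = tm Q idm \<odot> assoc_rl \<odot> assoc_rl \<odot> tm idm (assoc_lr \<odot> tm d idm \<odot> e) \<odot> r"
    by (simp only: GM3_K cmp_assoc tmR)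
  finally show ?thesis .
qed

lemma P1: "tm assoc_lr idm \<odot> assoc_rl \<odot> assoc_rl = assoc_rl \<odot> tm idm assoc_rl"
  by (rule ext) (clarsimp simp: split_paired_all ev_simps)
lemma P1_r: "tm assoc_lr idm \<odot> (assoc_rl \<odot> (assoc_rl \<odot> r)) = assoc_rl \<odot> (tm idm assoc_rl \<odot> r)"
  using arg_cong[OF P1, of "\<lambda>h. h \<odot> r"] by (simp only: cmp_assoc)
lemma P2: "assoc_lr \<odot> tm assoc_rl idm \<odot> assoc_rl = assoc_rl \<odot> tm idm assoc_lr"
  by (rule ext) (clarsimp simp: split_paired_all ev_simps)
lemma P2_r: "assoc_lr \<odot> (tm assoc_rl idm \<odot> (assoc_rl \<odot> r)) = assoc_rl \<odot> (tm idm assoc_lr \<odot> r)"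
  using arg_cong[OF P2, of "\<lambda>h. h \<odot> r"] by (simp only: cmp_assoc)

lemma GM4: "tm a idm \<odot> assoc_rl \<odot> tm idm p \<odot> assoc_lr \<odot> tm (tm f idm \<odot> tm n idm \<odot> assoc_rl \<odot> tm idm p \<odot> assoc_lr) idm
     \<odot> assoc_rl \<odot> tm idm d \<odot> assoc_rl \<odot> tm idm e \<odot> r
   = tm (a \<odot> tm (f \<odot> n) idm) idm \<odot> assoc_rl \<odot> assoc_rl \<odot> tm idm (tm idm p \<odot> assoc_lr \<odot> tm p idm \<odot> assoc_rl \<odot> tm idm d \<odot> e) \<odot> r"
proof -
  have "tm a idm \<odot> assoc_rl \<odot> tm idm p \<odot> assoc_lr \<odot> tm (tm f idm \<odot> tm n idm \<odot> assoc_rl \<odot> tm idm p \<odot> assoc_lr) idm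
     \<odot> assoc_rl \<odot> tm idm d \<odot> assoc_rl \<odot> tm idm e \<odot> r
   = tm a idm \<odot> assoc_rl \<odot> tm idm p \<odot> assoc_lr \<odot> tm (tm f idm) idm \<odot> tm (tm n idm) idm \<odot> tm assoc_rl idm
     \<odot> tm (tm idm p) idm \<odot> tm assoc_lr idm \<odot> assoc_rl \<odot> tm idm d \<odot> assoc_rl \<odot> tm idm e \<odot> r"
    by (simp only: cmp_assoc tmL)
  also have "\<dots> = tm a idm \<odot> assoc_rl \<odot> tm idm p \<odot> assoc_lr \<odot> tm (tm f idm) idm \<odot> tm (tm n idm) idm \<odot> tm assoc_rl idm
     \<odot> tm (tm idm p) idm \<odot> tm assoc_lr idm \<odot> assoc_rl \<odot> assoc_rl \<odot> tm idm (tm idm d) \<odot> tm idm e \<odot> r"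
    by (simp only: N_rl_idmR_r)
  also have "\<dots> = tm a idm \<odot> assoc_rl \<odot> tm idm p \<odot> assoc_lr \<odot> tm (tm f idm) idm \<odot> tm (tm n idm) idm \<odot> tm assoc_rl idm
     \<odot> tm (tm idm p) idm \<odot> assoc_rl \<odot> tm idm assoc_rl \<odot> tm idm (tm idm d) \<odot> tm idm e \<odot> r"
    by (simp only: P1_r)
  also have "\<dots> = tm a idm \<odot> assoc_rl \<odot> tm idm p \<odot> assoc_lr \<odot> tm (tm f idm) idm \<odot> tm (tm n idm) idm \<odot> tm assoc_rl idm
     \<odot> assoc_rl \<odot> tm idm (tm p idm) \<odot> tm idm assoc_rl \<odot> tm idm (tm idm d) \<odot> tm idm e \<odot> r"
    by (simp only: N_rl_r)
  also have "\<dots> = tm a idm \<odot> assoc_rl \<odot> tm idm p \<odot> tm f idm \<odot> tm n idm \<odot> assoc_lr \<odot> tm assoc_rl idm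
     \<odot> assoc_rl \<odot> tm idm (tm p idm) \<odot> tm idm assoc_rl \<odot> tm idm (tm idm d) \<odot> tm idm e \<odot> r"
    by (simp only: N_lr_idmL_r)
  also have "\<dots> = tm a idm \<odot> assoc_rl \<odot> tm (f \<odot> n) idm \<odot> tm idm p \<odot> assoc_lr \<odot> tm assoc_rl idm
     \<odot> assoc_rl \<odot> tm idm (tm p idm) \<odot> tm idm assoc_rl \<odot> tm idm (tm idm d) \<odot> tm idm e \<odot> r"
    by (simp only: tmL_r swap_r)
  also have "\<dots> = tm (a \<odot> tm (f \<odot> n) idm) idm \<odot> assoc_rl \<odot> tm idm p \<odot> assoc_rl \<odot> tm idm assoc_lr
     \<odot> tm idm (tm p idm) \<odot> tm idm assoc_rl \<odot> tm idm (tm idm d) \<odot> tm idm e \<odot> r"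
    by (simp only: N_rl_idm_r tmL_r P2_r)
  also have "\<dots> = tm (a \<odot> tm (f \<odot> n) idm) idm \<odot> assoc_rl \<odot> assoc_rl \<odot> tm idm (tm idm p \<odot> assoc_lr \<odot> tm p idm \<odot> assoc_rl \<odot> tm idm d \<odot> e) \<odot> r"
    by (simp only: cmp_assoc tmR N_rl_idmR_r)
  finally show ?thesis .
qed



locale cs =
  fixes Ob :: "'o set" and B :: "'o \<Rightarrow> 'o \<Rightarrow> 'c set"
    and dl :: "'o \<Rightarrow> 'o \<Rightarrow> 'o \<Rightarrow> 'c \<Rightarrow> ('c \<times> 'c \<Rightarrow>\<^sub>0 'k::field)"
    and ep :: "'o \<Rightarrow> 'c \<Rightarrow> (unit \<Rightarrow>\<^sub>0 'k)"
    and BA :: "'a set" and mu :: "'a \<times> 'a \<Rightarrow> ('a \<Rightarrow>\<^sub>0 'k)" and u :: "unit \<Rightarrow> ('a \<Rightarrow>\<^sub>0 'k)"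
    and psi :: "'o \<Rightarrow> 'o \<Rightarrow> 'c \<times> 'a \<Rightarrow> ('a \<times> 'c \<Rightarrow>\<^sub>0 'k)"
    and gm :: "'o \<Rightarrow> 'a \<times> 'c \<Rightarrow> ('a \<Rightarrow>\<^sub>0 'k)"
  assumes ent: "entwining Ob B dl ep BA mu u psi"
    and fin: "finite BA"
    and nc: "normalized_cointegral Ob B dl ep BA mu u psi gm"
begin

lemma dl_maps: "X \<in> Ob \<Longrightarrow> Y \<in> Ob \<Longrightarrow> Z \<in> Ob \<Longrightarrow> maps_to (B X Z) (B Y Z \<times> B X Y) (dl X Y Z)"
  using ent by (simp add: entwining_def coalg_several_def)

lemma mu_maps: "maps_to (BA \<times> BA) BA mu"
  using ent by (simp add: entwining_def k_algebra_def)

lemma u_maps: "maps_to UNIV BA u"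
  using ent by (simp add: entwining_def k_algebra_def)

lemma psi_maps: "X \<in> Ob \<Longrightarrow> Y \<in> Ob \<Longrightarrow> maps_to (B X Y \<times> BA) (BA \<times> B X Y) (psi X Y)"
  using ent by (simp add: entwining_def)

lemma gm_maps: "X \<in> Ob \<Longrightarrow> maps_to (BA \<times> B X X) BA (gm X)"
  using nc by (simp add: normalized_cointegral_def)

lemma coint1: "X \<in> Ob \<Longrightarrow> Y \<in> Ob \<Longrightarrow>
        eq_on (B X Y)
          (tm idm (psi X Y) \<odot> bmap (\<lambda>((a, c), b). (a, (c, b))) \<odot> tm (psi X Y) (gm X)
             \<odot> bmap (\<lambda>((c, (a, b)), d). ((c, a), (b, d)))
             \<odot> tm (tm idm (coev BA) \<odot> runit_inv) idm \<odot> dl X X Y)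
          (tm idm (tm (gm Y) idm) \<odot> bmap (\<lambda>((a, b), (c, d)). (a, ((b, c), d)))
             \<odot> tm (coev BA) (dl X Y Y) \<odot> lunit_inv)"
  using nc by (simp add: normalized_cointegral_def)

lemma coint2: "X \<in> Ob \<Longrightarrow>
        eq_on (B X X \<times> BA)
          (tm idm mu \<odot> tm idm (tm (gm X) idm) \<odot> bmap (\<lambda>((a, b), (c, d)). (a, ((b, c), d)))
             \<odot> tm (coev BA) idm \<odot> lunit_inv)
          (tm mu (gm X) \<odot> bmap (\<lambda>(a, ((b, d), c)). ((a, b), (d, c)))
             \<odot> tm idm (tm (coev BA) idm) \<odot> bmap (\<lambda>(a, c). (a, ((), c))) \<odot> psi X X)"
  using nc by (simp add: normalized_cointegral_def)

lemma coint3: "X \<in> Ob \<Longrightarrow>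
        eq_on (B X X)
          (mu \<odot> tm idm (gm X) \<odot> assoc_lr \<odot> tm (coev BA) idm \<odot> lunit_inv)
          (u \<odot> ep X)"
  using nc by (simp add: normalized_cointegral_def)

definition D :: "'o \<Rightarrow> 'c \<Rightarrow> ('a \<times> 'a \<Rightarrow>\<^sub>0 'k)" where
  "D X = tm idm (gm X) \<odot> assoc_lr \<odot> tm (coev BA) idm \<odot> lunit_inv"

lemma D_apply: "D X c = (\<Sum>a\<in>BA. tv (Poly_Mapping.single a 1) (gm X (a, c)))"
  by (simp add: D_def cmp_apply bmap_apply tm_apply coev_apply tv_sum_left app_sum idm_apply)

lemma coev_maps: "maps_to S (BA \<times> BA) (coev BA)"
  unfolding maps_to_def
proof (intro ballI subsetI)
  fix b x assume x: "x \<in> Poly_Mapping.keys (coev BA b)"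
  show "x \<in> BA \<times> BA"
  proof (rule ccontr)
    assume "x \<notin> BA \<times> BA"
    then have "Poly_Mapping.lookup (coev BA b) x = 0"
      by (auto simp: coev_apply lookup_sum lookup_single when_def intro!: sum.neutral)
    with x show False by (metis in_keys_iff)
  qed
qed

lemma D_maps: "X \<in> Ob \<Longrightarrow> maps_to (B X X) (BA \<times> BA) (D X)"
  unfolding D_def
  by (rule maps_to_cmp maps_to_tm maps_to_idm maps_to_assoc_lr maps_to_assoc_rl maps_to_lunit_inv
      maps_to_runit_inv coev_maps gm_maps)+

lemma G1: "tm idm (tm (gm Y) idm) \<odot> bmap (\<lambda>((a, b), (c, d)). (a, ((b, c), d)))
             \<odot> tm (coev BA) idm \<odot> lunit_inv = assoc_lr \<odot> tm (D Y) idm"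
  by (rule ext) (auto simp: cmp_apply bmap_apply tm_apply coev_apply tv_sum_left app_sum idm_apply
      D_apply app_tm_tv app_assoc_lr_tv)

lemma G2: "tm mu (gm X) \<odot> bmap (\<lambda>(a, ((b, d), c)). ((a, b), (d, c)))
             \<odot> tm idm (tm (coev BA) idm) \<odot> bmap (\<lambda>(a, c). (a, ((), c)))
           = tm mu idm \<odot> assoc_rl \<odot> tm idm (D X)"
  by (rule ext) (auto simp: cmp_apply bmap_apply tm_apply coev_apply tv_sum_left tv_sum_right app_sum idm_apply
      D_apply app_tm_tv app_assoc_rl_tv)

lemma C2': "X \<in> Ob \<Longrightarrow> eq_on (B X X \<times> BA) (tm idm mu \<odot> assoc_lr \<odot> tm (D X) idm)
    (tm mu idm \<odot> assoc_rl \<odot> tm idm (D X) \<odot> psi X X)"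
proof -
  assume X: "X \<in> Ob"
  have R: "tm mu (gm X) \<odot> bmap (\<lambda>(a, ((b, d), c)). ((a, b), (d, c)))
             \<odot> tm idm (tm (coev BA) idm) \<odot> bmap (\<lambda>(a, c). (a, ((), c))) \<odot> psi X X
     = (tm mu (gm X) \<odot> bmap (\<lambda>(a, ((b, d), c)). ((a, b), (d, c)))
             \<odot> tm idm (tm (coev BA) idm) \<odot> bmap (\<lambda>(a, c). (a, ((), c)))) \<odot> psi X X"
    by (simp only: cmp_assoc)
  also have "\<dots> = (tm mu idm \<odot> assoc_rl \<odot> tm idm (D X)) \<odot> psi X X"
    by (simp only: G2)
  finally have R: "tm mu (gm X) \<odot> bmap (\<lambda>(a, ((b, d), c)). ((a, b), (d, c)))
             \<odot> tm idm (tm (coev BA) idm) \<odot> bmap (\<lambda>(a, c). (a, ((), c))) \<odot> psi X X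
     = tm mu idm \<odot> assoc_rl \<odot> tm idm (D X) \<odot> psi X X" by (simp only: cmp_assoc)
  show ?thesis using coint2[OF X] by (simp only: G1 R)
qed

lemma G3: "tm (psi X Y) (gm X) \<odot> bmap (\<lambda>((c, (a, b)), d). ((c, a), (b, d)))
             \<odot> tm (tm idm (coev BA) \<odot> runit_inv) idm
           = tm (psi X Y) idm \<odot> assoc_rl \<odot> tm idm (D X)"
  by (rule ext) (auto simp: cmp_apply bmap_apply tm_apply coev_apply tv_sum_left tv_sum_right app_sum idm_apply
      D_apply app_tm_tv app_assoc_rl_tv)

lemma C1': "X \<in> Ob \<Longrightarrow> Y \<in> Ob \<Longrightarrow> eq_on (B X Y)
    (tm idm (psi X Y) \<odot> assoc_lr \<odot> tm (psi X Y) idm \<odot> assoc_rl \<odot> tm idm (D X) \<odot> dl X X Y)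
    (assoc_lr \<odot> tm (D Y) idm \<odot> dl X Y Y)"
proof -
  assume X: "X \<in> Ob" and Y: "Y \<in> Ob"
  have L: "tm (psi X Y) (gm X) \<odot> bmap (\<lambda>((c, (a, b)), d). ((c, a), (b, d)))
             \<odot> tm (tm idm (coev BA) \<odot> runit_inv) idm \<odot> dl X X Y
     = tm (psi X Y) idm \<odot> assoc_rl \<odot> tm idm (D X) \<odot> dl X X Y"
    using arg_cong[OF G3, of "\<lambda>h. h \<odot> dl X X Y"] by (simp only: cmp_assoc)
  have "tm (coev BA) (dl X Y Y) \<odot> lunit_inv = tm (coev BA) idm \<odot> (tm idm (dl X Y Y) \<odot> lunit_inv)"
    by (simp add: tm_cmp flip: cmp_assoc)
  also have "\<dots> = tm (coev BA) idm \<odot> lunit_inv \<odot> dl X Y Y"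
    by (simp add: lunit_inv_nat)
  finally have R0: "tm (coev BA) (dl X Y Y) \<odot> lunit_inv = tm (coev BA) idm \<odot> lunit_inv \<odot> dl X Y Y" .
  have R: "tm idm (tm (gm Y) idm) \<odot> bmap (\<lambda>((a, b), (c, d)). (a, ((b, c), d)))
             \<odot> tm (coev BA) (dl X Y Y) \<odot> lunit_inv = assoc_lr \<odot> tm (D Y) idm \<odot> dl X Y Y"
    using arg_cong[OF G1, of "\<lambda>h. h \<odot> dl X Y Y"] by (simp only: cmp_assoc R0)
  show ?thesis using coint1[OF X Y] by (simp only: L R)
qed

lemma eq_on_trans_eq1[trans]: "eq_on S f g \<Longrightarrow> g = h \<Longrightarrow> eq_on S f h" by simp
lemma eq_on_trans_eq2[trans]: "f = g \<Longrightarrow> eq_on S g h \<Longrightarrow> eq_on S f h" by simp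
lemmas [trans] = eq_on_trans

lemmas maps_rules = maps_to_cmp maps_to_tm maps_to_idm maps_to_assoc_lr maps_to_assoc_rl maps_to_lunit_inv
      maps_to_runit_inv maps_to_lunit maps_to_runit coev_maps gm_maps D_maps mu_maps u_maps psi_maps dl_maps
      maps_to_UNIV

definition avg where
  "avg aM aN rN f X = aM X \<odot> tm (f X \<odot> aN X) idm \<odot> assoc_rl \<odot> tm idm (D X) \<odot> rN X X"

context
  fixes BM :: "'o \<Rightarrow> 'm set" and rho :: "'o \<Rightarrow> 'o \<Rightarrow> 'm \<Rightarrow> ('m \<times> 'c \<Rightarrow>\<^sub>0 'k)"
    and act :: "'o \<Rightarrow> 'm \<times> 'a \<Rightarrow> ('m \<Rightarrow>\<^sub>0 'k)"
  assumes M: "entwined_module Ob B dl ep BA mu u psi BM rho act"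
begin

lemma rho_maps: "X \<in> Ob \<Longrightarrow> Y \<in> Ob \<Longrightarrow> maps_to (BM X) (BM Y \<times> B X Y) (rho X Y)"
  using M by (simp add: entwined_module_def comodule_def)
lemma Mco: "X \<in> Ob \<Longrightarrow> Y \<in> Ob \<Longrightarrow> Z \<in> Ob \<Longrightarrow>
   eq_on (BM X) (tm (rho Z Y) idm \<odot> rho X Z) (assoc_rl \<odot> tm idm (dl X Z Y) \<odot> rho X Y)"
  using M by (simp add: entwined_module_def comodule_def)
lemma Mcu: "X \<in> Ob \<Longrightarrow> eq_on (BM X) (runit \<odot> tm idm (ep X) \<odot> rho X X) idm"
  using M by (simp add: entwined_module_def comodule_def)
lemma act_maps: "X \<in> Ob \<Longrightarrow> maps_to (BM X \<times> BA) (BM X) (act X)"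
  using M by (simp add: entwined_module_def)
lemma Mas: "X \<in> Ob \<Longrightarrow> eq_on ((BM X \<times> BA) \<times> BA) (act X \<odot> tm (act X) idm) (act X \<odot> tm idm mu \<odot> assoc_lr)"
  using M by (simp add: entwined_module_def)
lemma Mun: "X \<in> Ob \<Longrightarrow> eq_on (BM X) (act X \<odot> tm idm u \<odot> runit_inv) idm"
  using M by (simp add: entwined_module_def)
lemma Mcp: "X \<in> Ob \<Longrightarrow> Y \<in> Ob \<Longrightarrow> eq_on (BM X \<times> BA) (rho X Y \<odot> act X)
          (tm (act Y) idm \<odot> assoc_rl \<odot> tm idm (psi X Y) \<odot> assoc_lr \<odot> tm (rho X Y) idm)"
  using M by (simp add: entwined_module_def)

lemma L_idm:
  assumes X: "X \<in> Ob"
  shows "eq_on (BM X) (avg act act rho (\<lambda>_. idm) X) idm"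
proof -
  have "avg act act rho (\<lambda>_. idm) X = (act X \<odot> tm (act X) idm) \<odot> (assoc_rl \<odot> tm idm (D X) \<odot> rho X X)"
    by (simp add: avg_def cmp_assoc)
  also have "eq_on (BM X) \<dots> ((act X \<odot> tm idm mu \<odot> assoc_lr) \<odot> (assoc_rl \<odot> tm idm (D X) \<odot> rho X X))"
    by (rule eq_on_cmpR[OF Mas[OF X]]) (rule maps_rules rho_maps X)+
  also have "(act X \<odot> tm idm mu \<odot> assoc_lr) \<odot> (assoc_rl \<odot> tm idm (D X) \<odot> rho X X)
      = act X \<odot> tm idm (mu \<odot> D X) \<odot> rho X X"
    by (simp add: cmp_assoc lr_rl_r tm_cmp_r)
  also have "eq_on (BM X) \<dots> (act X \<odot> tm idm (u \<odot> ep X) \<odot> rho X X)"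
    by (rule eq_on_cmpL, rule eq_on_cmpR[OF eq_on_tm[OF eq_on_refl]])
       (use coint3[OF X] in \<open>simp add: D_def\<close>, rule rho_maps, simp_all add: X)
  also have "act X \<odot> tm idm (u \<odot> ep X) \<odot> rho X X =
     (act X \<odot> tm idm u \<odot> runit_inv) \<odot> (runit \<odot> tm idm (ep X) \<odot> rho X X)"
  proof -
    have e: "tm idm (u \<odot> ep X) = tm idm u \<odot> tm idm (ep X)" by (simp add: tm_cmp)
    show ?thesis by (simp only: e cmp_assoc runit_inv_runit_r)
  qed
  also have "eq_on (BM X) \<dots> (idm \<odot> (runit \<odot> tm idm (ep X) \<odot> rho X X))"
    by (rule eq_on_cmpR[OF Mun[OF X]]) (rule maps_rules rho_maps X)+
  also have "eq_on (BM X) \<dots> idm"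
    using Mcu[OF X] by simp
  finally show ?thesis .
qed

end

end


context cs
begin

lemma avg_maps:
  assumes M: "entwined_module Ob B dl ep BA mu u psi BM rho act"
    and N: "entwined_module Ob B dl ep BA mu u psi BN rhoN actN"
    and fm: "maps_to (BN X) (BM X) (f X)" and X: "X \<in> Ob"
  shows "maps_to (BN X) (BM X) (avg act actN rhoN f X)"
  unfolding avg_def
  by (rule maps_rules rho_maps[OF N] act_maps[OF N] act_maps[OF M] fm X)+

lemma avg_alin:
  assumes M: "entwined_module Ob B dl ep BA mu u psi BM rho act"
    and N: "entwined_module Ob B dl ep BA mu u psi BN rhoN actN"
    and fm: "maps_to (BN X) (BM X) (f X)" and X: "X \<in> Ob"
  shows "eq_on (BN X \<times> BA) (avg act actN rhoN f X \<odot> actN X) (act X \<odot> tm (avg act actN rhoN f X) idm)"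
proof -
  let ?aM = "act X" and ?aN = "actN X" and ?F = "f X \<odot> actN X" and ?D = "D X" and ?p = "psi X X"
    and ?r = "rhoN X X"
  have s1: "avg act actN rhoN f X \<odot> actN X = (?aM \<odot> tm ?F idm \<odot> assoc_rl \<odot> tm idm ?D) \<odot> (?r \<odot> ?aN)"
    by (simp add: avg_def cmp_assoc)
  have s2: "eq_on (BN X \<times> BA) ((?aM \<odot> tm ?F idm \<odot> assoc_rl \<odot> tm idm ?D) \<odot> (?r \<odot> ?aN))
     ((?aM \<odot> tm ?F idm \<odot> assoc_rl \<odot> tm idm ?D) \<odot> (tm ?aN idm \<odot> assoc_rl \<odot> tm idm ?p \<odot> assoc_lr \<odot> tm ?r idm))"
    by (rule eq_on_cmpL[OF Mcp[OF N X X]])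
  have s3: "(?aM \<odot> tm ?F idm \<odot> assoc_rl \<odot> tm idm ?D) \<odot> (tm ?aN idm \<odot> assoc_rl \<odot> tm idm ?p \<odot> assoc_lr \<odot> tm ?r idm)
     = ?aM \<odot> tm (f X \<odot> (?aN \<odot> tm ?aN idm)) idm \<odot> (assoc_rl \<odot> tm idm ?D \<odot> assoc_rl \<odot> tm idm ?p \<odot> assoc_lr \<odot> tm ?r idm)"
    by (simp only: cmp_assoc swap_r N_rl_idm_r tmL_r)
  have s4: "eq_on (BN X \<times> BA) (?aM \<odot> tm (f X \<odot> (?aN \<odot> tm ?aN idm)) idm \<odot> (assoc_rl \<odot> tm idm ?D \<odot> assoc_rl \<odot> tm idm ?p \<odot> assoc_lr \<odot> tm ?r idm))
      (?aM \<odot> tm (f X \<odot> (?aN \<odot> tm idm mu \<odot> assoc_lr)) idm \<odot> (assoc_rl \<odot> tm idm ?D \<odot> assoc_rl \<odot> tm idm ?p \<odot> assoc_lr \<odot> tm ?r idm))"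
    by (rule eq_on_cmpL, rule eq_on_cmpR[OF eq_on_tm[OF eq_on_cmpL[OF Mas[OF N X]] eq_on_refl]])
       (rule maps_rules rho_maps[OF N] X)+
  have s5: "?aM \<odot> tm (f X \<odot> (?aN \<odot> tm idm mu \<odot> assoc_lr)) idm \<odot> (assoc_rl \<odot> tm idm ?D \<odot> assoc_rl \<odot> tm idm ?p \<odot> assoc_lr \<odot> tm ?r idm)
     = (?aM \<odot> tm ?F idm \<odot> assoc_rl) \<odot> (tm idm (tm mu idm \<odot> assoc_rl \<odot> tm idm ?D \<odot> ?p) \<odot> (assoc_lr \<odot> tm ?r idm))"
    using GM1[of ?F mu ?D ?p "assoc_lr \<odot> tm ?r idm"] by (simp only: cmp_assoc)
  have s6: "eq_on (BN X \<times> BA) ((?aM \<odot> tm ?F idm \<odot> assoc_rl) \<odot> (tm idm (tm mu idm \<odot> assoc_rl \<odot> tm idm ?D \<odot> ?p) \<odot> (assoc_lr \<odot> tm ?r idm)))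
     ((?aM \<odot> tm ?F idm \<odot> assoc_rl) \<odot> (tm idm (tm idm mu \<odot> assoc_lr \<odot> tm ?D idm) \<odot> (assoc_lr \<odot> tm ?r idm)))"
    by (rule eq_on_cmpL, rule eq_on_cmpR[OF eq_on_tm[OF eq_on_refl eq_on_sym[OF C2'[OF X]]]])
       (rule maps_rules rho_maps[OF N] X)+
  have s7: "(?aM \<odot> tm ?F idm \<odot> assoc_rl) \<odot> (tm idm (tm idm mu \<odot> assoc_lr \<odot> tm ?D idm) \<odot> (assoc_lr \<odot> tm ?r idm))
     = ?aM \<odot> tm ?F idm \<odot> tm idm mu \<odot> assoc_lr \<odot> tm assoc_rl idm \<odot> tm (tm idm ?D) idm \<odot> tm ?r idm"
    using GM2[of ?F mu ?D "tm ?r idm"] by (simp only: cmp_assoc)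
  have r1: "act X \<odot> tm (avg act actN rhoN f X) idm
     = (?aM \<odot> tm ?aM idm) \<odot> (tm (tm ?F idm) idm \<odot> tm assoc_rl idm \<odot> tm (tm idm ?D) idm \<odot> tm ?r idm)"
    by (simp only: avg_def tmL cmp_assoc)
  have r2: "eq_on (BN X \<times> BA) ((?aM \<odot> tm ?aM idm) \<odot> (tm (tm ?F idm) idm \<odot> tm assoc_rl idm \<odot> tm (tm idm ?D) idm \<odot> tm ?r idm))
     ((?aM \<odot> tm idm mu \<odot> assoc_lr) \<odot> (tm (tm ?F idm) idm \<odot> tm assoc_rl idm \<odot> tm (tm idm ?D) idm \<odot> tm ?r idm))"
    by (rule eq_on_cmpR[OF Mas[OF M X]])
       (rule maps_rules rho_maps[OF N] act_maps[OF N] fm X)+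
  have r3: "(?aM \<odot> tm idm mu \<odot> assoc_lr) \<odot> (tm (tm ?F idm) idm \<odot> tm assoc_rl idm \<odot> tm (tm idm ?D) idm \<odot> tm ?r idm)
     = ?aM \<odot> tm ?F idm \<odot> tm idm mu \<odot> assoc_lr \<odot> tm assoc_rl idm \<odot> tm (tm idm ?D) idm \<odot> tm ?r idm"
    by (simp only: cmp_assoc N_lr_idmL_r swap_r)
  have L: "eq_on (BN X \<times> BA) (avg act actN rhoN f X \<odot> actN X)
      (?aM \<odot> tm ?F idm \<odot> tm idm mu \<odot> assoc_lr \<odot> tm assoc_rl idm \<odot> tm (tm idm ?D) idm \<odot> tm ?r idm)"
    unfolding s1 s3[symmetric] s5[symmetric] s7[symmetric]
    by (rule eq_on_trans[OF s2 eq_on_trans[OF _ s6]]) (simp only: s3 s5[symmetric] s4)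
  have R: "eq_on (BN X \<times> BA) (act X \<odot> tm (avg act actN rhoN f X) idm)
      (?aM \<odot> tm ?F idm \<odot> tm idm mu \<odot> assoc_lr \<odot> tm assoc_rl idm \<odot> tm (tm idm ?D) idm \<odot> tm ?r idm)"
    unfolding r1 r3[symmetric] by (rule r2)
  show ?thesis by (rule eq_on_trans[OF L eq_on_sym[OF R]])
qed

lemma avg_colin:
  assumes M: "entwined_module Ob B dl ep BA mu u psi BM rho act"
    and N: "entwined_module Ob B dl ep BA mu u psi BN rhoN actN"
    and fc: "comodule_mor Ob B BN rhoN BM rho f" and X: "X \<in> Ob" and Y: "Y \<in> Ob"
  shows "eq_on (BN X) (tm (avg act actN rhoN f Y) idm \<odot> rhoN X Y) (rho X Y \<odot> avg act actN rhoN f X)"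
proof -
  have fmX: "maps_to (BN X) (BM X) (f X)" and fmY: "maps_to (BN Y) (BM Y) (f Y)"
    using fc X Y by (auto simp: comodule_mor_def)
  have fco: "eq_on (BN X) (tm (f Y) idm \<odot> rhoN X Y) (rho X Y \<odot> f X)"
    using fc X Y by (auto simp: comodule_mor_def)
  let ?Q = "act Y \<odot> tm (f Y \<odot> actN Y) idm"
  let ?L = "tm idm (psi X Y) \<odot> assoc_lr \<odot> tm (psi X Y) idm \<odot> assoc_rl \<odot> tm idm (D X) \<odot> dl X X Y"
  let ?A = "tm (act Y) idm \<odot> assoc_rl \<odot> tm idm (psi X Y) \<odot> assoc_lr"
  let ?R0 = "assoc_rl \<odot> tm idm (D X) \<odot> rhoN X X"
  let ?Epre = "tm (act Y) idm \<odot> assoc_rl \<odot> tm idm (psi X Y) \<odot> assoc_lr \<odot>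
     tm (tm (f Y) idm \<odot> tm (actN Y) idm \<odot> assoc_rl \<odot> tm idm (psi X Y) \<odot> assoc_lr) idm \<odot> assoc_rl \<odot> tm idm (D X)"
  have l1: "tm (avg act actN rhoN f Y) idm \<odot> rhoN X Y
     = tm (?Q \<odot> assoc_rl \<odot> tm idm (D Y)) idm \<odot> (tm (rhoN Y Y) idm \<odot> rhoN X Y)"
    by (simp only: avg_def tmL cmp_assoc)
  have l2: "eq_on (BN X) (tm (?Q \<odot> assoc_rl \<odot> tm idm (D Y)) idm \<odot> (tm (rhoN Y Y) idm \<odot> rhoN X Y))
      (tm (?Q \<odot> assoc_rl \<odot> tm idm (D Y)) idm \<odot> (assoc_rl \<odot> tm idm (dl X Y Y) \<odot> rhoN X Y))"
    by (rule eq_on_cmpL[OF Mco[OF N X Y Y]])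
  have l3: "tm (?Q \<odot> assoc_rl \<odot> tm idm (D Y)) idm \<odot> (assoc_rl \<odot> tm idm (dl X Y Y) \<odot> rhoN X Y)
     = (tm ?Q idm \<odot> assoc_rl \<odot> assoc_rl) \<odot> (tm idm (assoc_lr \<odot> tm (D Y) idm \<odot> dl X Y Y) \<odot> rhoN X Y)"
    using GM3[of ?Q "D Y" "dl X Y Y" "rhoN X Y"] by (simp only: cmp_assoc)
  have l4: "eq_on (BN X) ((tm ?Q idm \<odot> assoc_rl \<odot> assoc_rl) \<odot> (tm idm (assoc_lr \<odot> tm (D Y) idm \<odot> dl X Y Y) \<odot> rhoN X Y))
     ((tm ?Q idm \<odot> assoc_rl \<odot> assoc_rl) \<odot> (tm idm ?L \<odot> rhoN X Y))"
    by (rule eq_on_cmpL, rule eq_on_cmpR[OF eq_on_tm[OF eq_on_refl eq_on_sym[OF C1'[OF X Y]]]])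
       (rule rho_maps[OF N] X Y)+
  have r1: "rho X Y \<odot> avg act actN rhoN f X = (rho X Y \<odot> act X) \<odot> (tm (f X \<odot> actN X) idm \<odot> ?R0)"
    by (simp only: avg_def cmp_assoc)
  have r2: "eq_on (BN X) ((rho X Y \<odot> act X) \<odot> (tm (f X \<odot> actN X) idm \<odot> ?R0))
     ((tm (act Y) idm \<odot> assoc_rl \<odot> tm idm (psi X Y) \<odot> assoc_lr \<odot> tm (rho X Y) idm) \<odot> (tm (f X \<odot> actN X) idm \<odot> ?R0))"
    by (rule eq_on_cmpR[OF Mcp[OF M X Y]]) (rule maps_rules rho_maps[OF N] act_maps[OF N] fmX X)+
  have r3: "(tm (act Y) idm \<odot> assoc_rl \<odot> tm idm (psi X Y) \<odot> assoc_lr \<odot> tm (rho X Y) idm) \<odot> (tm (f X \<odot> actN X) idm \<odot> ?R0)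
     = ?A \<odot> (tm ((rho X Y \<odot> f X) \<odot> actN X) idm \<odot> ?R0)"
    by (simp only: cmp_assoc tmL_r)
  have r4: "eq_on (BN X) (?A \<odot> (tm ((rho X Y \<odot> f X) \<odot> actN X) idm \<odot> ?R0))
     (?A \<odot> (tm ((tm (f Y) idm \<odot> rhoN X Y) \<odot> actN X) idm \<odot> ?R0))"
    by (rule eq_on_cmpL, rule eq_on_cmpR[OF eq_on_tm[OF eq_on_cmpR[OF eq_on_sym[OF fco]] eq_on_refl]])
       (rule maps_rules rho_maps[OF N] act_maps[OF N] X)+
  have r5: "eq_on (BN X) (?A \<odot> (tm ((tm (f Y) idm \<odot> rhoN X Y) \<odot> actN X) idm \<odot> ?R0))
     (?A \<odot> (tm (tm (f Y) idm \<odot> (tm (actN Y) idm \<odot> assoc_rl \<odot> tm idm (psi X Y) \<odot> assoc_lr \<odot> tm (rhoN X Y) idm)) idm \<odot> ?R0))"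
    unfolding cmp_assoc[of "tm (f Y) idm"]
    by (rule eq_on_cmpL, rule eq_on_cmpR[OF eq_on_tm[OF eq_on_cmpL[OF Mcp[OF N X Y]] eq_on_refl]])
       (rule maps_rules rho_maps[OF N] X)+
  have r6: "?A \<odot> (tm (tm (f Y) idm \<odot> (tm (actN Y) idm \<odot> assoc_rl \<odot> tm idm (psi X Y) \<odot> assoc_lr \<odot> tm (rhoN X Y) idm)) idm \<odot> ?R0)
     = ?Epre \<odot> (tm (rhoN X Y) idm \<odot> rhoN X X)"
    by (simp only: cmp_assoc tmL N_rl_r[symmetric] tm_idm swap_r[symmetric])
  have r7: "eq_on (BN X) (?Epre \<odot> (tm (rhoN X Y) idm \<odot> rhoN X X))
     (?Epre \<odot> (assoc_rl \<odot> tm idm (dl X X Y) \<odot> rhoN X Y))"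
    by (rule eq_on_cmpL[OF Mco[OF N X Y X]])
  have r8: "?Epre \<odot> (assoc_rl \<odot> tm idm (dl X X Y) \<odot> rhoN X Y)
     = (tm ?Q idm \<odot> assoc_rl \<odot> assoc_rl) \<odot> (tm idm ?L \<odot> rhoN X Y)"
    using GM4[of "act Y" "psi X Y" "f Y" "actN Y" "D X" "dl X X Y" "rhoN X Y"] by (simp only: cmp_assoc)
  have L: "eq_on (BN X) (tm (avg act actN rhoN f Y) idm \<odot> rhoN X Y) ((tm ?Q idm \<odot> assoc_rl \<odot> assoc_rl) \<odot> (tm idm ?L \<odot> rhoN X Y))"
    unfolding l1 by (rule eq_on_trans[OF l2]) (unfold l3, rule l4)
  have R: "eq_on (BN X) (rho X Y \<odot> avg act actN rhoN f X) ((tm ?Q idm \<odot> assoc_rl \<odot> assoc_rl) \<odot> (tm idm ?L \<odot> rhoN X Y))"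
    unfolding r1 r8[symmetric]
    by (rule eq_on_trans[OF r2]) (unfold r3, rule eq_on_trans[OF r4 eq_on_trans[OF r5]], unfold r6, rule r7)
  show ?thesis by (rule eq_on_trans[OF L eq_on_sym[OF R]])
qed

lemma avg_cong:
  assumes N: "entwined_module Ob B dl ep BA mu u psi BN rhoN actN"
    and e: "eq_on (BN X) (f1 X) (f2 X)" and X: "X \<in> Ob"
  shows "eq_on (BN X) (avg act actN rhoN f1 X) (avg act actN rhoN f2 X)"
  unfolding avg_def
  by (rule eq_on_cmpL, rule eq_on_cmpR[OF eq_on_tm[OF eq_on_cmpR[OF e] eq_on_refl]])
     (rule maps_rules rho_maps[OF N] act_maps[OF N] X)+

lemma avg_left:
  assumes N: "entwined_module Ob B dl ep BA mu u psi BN rhoN actN"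
    and fm: "maps_to (BN X) (BM X) (f X)"
    and ga: "eq_on (BM X \<times> BA) (g X \<odot> act X) (act' X \<odot> tm (g X) idm)" and X: "X \<in> Ob"
    and actm: "maps_to (BN X \<times> BA) (BN X) (actN X)"
  shows "eq_on (BN X) (g X \<odot> avg act actN rhoN f X) (avg act' actN rhoN (\<lambda>X. g X \<odot> f X) X)"
proof -
  have "g X \<odot> avg act actN rhoN f X = (g X \<odot> act X) \<odot> (tm (f X \<odot> actN X) idm \<odot> assoc_rl \<odot> tm idm (D X) \<odot> rhoN X X)"
    by (simp only: avg_def cmp_assoc)
  also have "eq_on (BN X) \<dots> ((act' X \<odot> tm (g X) idm) \<odot> (tm (f X \<odot> actN X) idm \<odot> assoc_rl \<odot> tm idm (D X) \<odot> rhoN X X))"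
    by (rule eq_on_cmpR[OF ga]) (rule maps_rules rho_maps[OF N] actm fm X)+
  also have "(act' X \<odot> tm (g X) idm) \<odot> (tm (f X \<odot> actN X) idm \<odot> assoc_rl \<odot> tm idm (D X) \<odot> rhoN X X)
     = avg act' actN rhoN (\<lambda>X. g X \<odot> f X) X"
    by (simp only: avg_def cmp_assoc tmL_r)
  finally show ?thesis .
qed

lemma avg_right:
  assumes N: "entwined_module Ob B dl ep BA mu u psi BN rhoN actN"
    and N': "entwined_module Ob B dl ep BA mu u psi BN' rho' act'"
    and hm: "maps_to (BN' X) (BN X) (h X)"
    and hco: "eq_on (BN' X) (tm (h X) idm \<odot> rho' X X) (rhoN X X \<odot> h X)"
    and ha: "eq_on (BN' X \<times> BA) (h X \<odot> act' X) (actN X \<odot> tm (h X) idm)" and X: "X \<in> Ob"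
  shows "eq_on (BN' X) (avg act actN rhoN f X \<odot> h X) (avg act act' rho' (\<lambda>X. f X \<odot> h X) X)"
proof -
  have "avg act actN rhoN f X \<odot> h X = (act X \<odot> tm (f X \<odot> actN X) idm \<odot> assoc_rl \<odot> tm idm (D X)) \<odot> (rhoN X X \<odot> h X)"
    by (simp only: avg_def cmp_assoc)
  also have "eq_on (BN' X) \<dots> ((act X \<odot> tm (f X \<odot> actN X) idm \<odot> assoc_rl \<odot> tm idm (D X)) \<odot> (tm (h X) idm \<odot> rho' X X))"
    by (rule eq_on_cmpL[OF eq_on_sym[OF hco]])
  also have "(act X \<odot> tm (f X \<odot> actN X) idm \<odot> assoc_rl \<odot> tm idm (D X)) \<odot> (tm (h X) idm \<odot> rho' X X)
     = act X \<odot> (tm (f X \<odot> (actN X \<odot> tm (h X) idm)) idm \<odot> (assoc_rl \<odot> tm idm (D X) \<odot> rho' X X))"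
    by (simp only: cmp_assoc swap_r N_rl_idm_r tmL_r)
  also have "eq_on (BN' X) \<dots> (act X \<odot> (tm (f X \<odot> (h X \<odot> act' X)) idm \<odot> (assoc_rl \<odot> tm idm (D X) \<odot> rho' X X)))"
    by (rule eq_on_cmpL, rule eq_on_cmpR[OF eq_on_tm[OF eq_on_cmpL[OF eq_on_sym[OF ha]] eq_on_refl]])
       (rule maps_rules rho_maps[OF N'] X)+
  also have "act X \<odot> (tm (f X \<odot> (h X \<odot> act' X)) idm \<odot> (assoc_rl \<odot> tm idm (D X) \<odot> rho' X X))
     = avg act act' rho' (\<lambda>X. f X \<odot> h X) X"
    by (simp only: avg_def cmp_assoc)
  finally show ?thesis .
qed

end

theorem proposition7p7:
  fixes Ob :: "'o set" and B :: "'o \<Rightarrow> 'o \<Rightarrow> 'c set"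
    and dl :: "'o \<Rightarrow> 'o \<Rightarrow> 'o \<Rightarrow> 'c \<Rightarrow> ('c \<times> 'c \<Rightarrow>\<^sub>0 'k::field)"
    and ep :: "'o \<Rightarrow> 'c \<Rightarrow> (unit \<Rightarrow>\<^sub>0 'k)"
    and BA :: "'a set" and mu :: "'a \<times> 'a \<Rightarrow> ('a \<Rightarrow>\<^sub>0 'k)" and u :: "unit \<Rightarrow> ('a \<Rightarrow>\<^sub>0 'k)"
    and psi :: "'o \<Rightarrow> 'o \<Rightarrow> 'c \<times> 'a \<Rightarrow> ('a \<times> 'c \<Rightarrow>\<^sub>0 'k)"
    and BM :: "'o \<Rightarrow> 'm set" and rho :: "'o \<Rightarrow> 'o \<Rightarrow> 'm \<Rightarrow> ('m \<times> 'c \<Rightarrow>\<^sub>0 'k)"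
    and act :: "'o \<Rightarrow> 'm \<times> 'a \<Rightarrow> ('m \<Rightarrow>\<^sub>0 'k)"
    and BN :: "'o \<Rightarrow> 'n set" and rho' :: "'o \<Rightarrow> 'o \<Rightarrow> 'n \<Rightarrow> ('n \<times> 'c \<Rightarrow>\<^sub>0 'k)"
    and act' :: "'o \<Rightarrow> 'n \<times> 'a \<Rightarrow> ('n \<Rightarrow>\<^sub>0 'k)"
    and phi :: "'o \<Rightarrow> 'm \<Rightarrow> ('n \<Rightarrow>\<^sub>0 'k)"
  assumes ent: "entwining Ob B dl ep BA mu u psi"
    and fin: "finite BA"
    and coint: "\<exists>gm. normalized_cointegral Ob B dl ep BA mu u psi gm"
    and M: "entwined_module Ob B dl ep BA mu u psi BM rho act"
    and M': "entwined_module Ob B dl ep BA mu u psi BN rho' act'"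
    and phi: "entwined_mor Ob B BA BM rho act BN rho' act' phi"
  shows "((\<exists>sigma. entwined_mor Ob B BA BN rho' act' BM rho act sigma \<and> is_section_of Ob BN sigma phi)
            \<longleftrightarrow> (\<exists>sigma. comodule_mor Ob B BN rho' BM rho sigma \<and> is_section_of Ob BN sigma phi))
       \<and> ((\<exists>r. entwined_mor Ob B BA BN rho' act' BM rho act r \<and> is_retraction_of Ob BM r phi)
            \<longleftrightarrow> (\<exists>r. comodule_mor Ob B BN rho' BM rho r \<and> is_retraction_of Ob BM r phi))"
proof -
  obtain gm where gm: "normalized_cointegral Ob B dl ep BA mu u psi gm" using coint by blast
  interpret cs Ob B dl ep BA mu u psi gm using ent fin gm by unfold_locales
  have phic: "comodule_mor Ob B BM rho BN rho' phi"
    and phia: "\<And>X. X \<in> Ob \<Longrightarrow> eq_on (BM X \<times> BA) (phi X \<odot> act X) (act' X \<odot> tm (phi X) idm)"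
    using phi by (simp_all add: entwined_mor_def)
  have phim: "\<And>X. X \<in> Ob \<Longrightarrow> maps_to (BM X) (BN X) (phi X)"
    and phico: "\<And>X. X \<in> Ob \<Longrightarrow> eq_on (BM X) (tm (phi X) idm \<odot> rho X X) (rho' X X \<odot> phi X)"
    using phic by (simp_all add: comodule_mor_def)
  have avg_ent: "entwined_mor Ob B BA BN rho' act' BM rho act (avg act act' rho' s)"
    if sc: "comodule_mor Ob B BN rho' BM rho s" for s
  proof -
    have sm: "\<And>X. X \<in> Ob \<Longrightarrow> maps_to (BN X) (BM X) (s X)"
      using sc by (simp add: comodule_mor_def)
    show ?thesis
      unfolding entwined_mor_def comodule_mor_def
    proof (intro conjI ballI)
      fix X assume X: "X \<in> Ob"
      show "maps_to (BN X) (BM X) (avg act act' rho' s X)" by (rule avg_maps[where f=s, OF M M' sm[OF X] X])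
      show "eq_on (BN X \<times> BA) (avg act act' rho' s X \<odot> act' X) (act X \<odot> tm (avg act act' rho' s X) idm)"
        by (rule avg_alin[where f=s, OF M M' sm[OF X] X])
      fix Y assume Y: "Y \<in> Ob"
      show "eq_on (BN X) (tm (avg act act' rho' s Y) idm \<odot> rho' X Y) (rho X Y \<odot> avg act act' rho' s X)"
        by (rule avg_colin[OF M M' sc X Y])
    qed
  qed
  have S: "(\<exists>sigma. entwined_mor Ob B BA BN rho' act' BM rho act sigma \<and> is_section_of Ob BN sigma phi)
            \<longleftrightarrow> (\<exists>sigma. comodule_mor Ob B BN rho' BM rho sigma \<and> is_section_of Ob BN sigma phi)"
  proof
    assume "\<exists>sigma. entwined_mor Ob B BA BN rho' act' BM rho act sigma \<and> is_section_of Ob BN sigma phi"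
    then show "\<exists>sigma. comodule_mor Ob B BN rho' BM rho sigma \<and> is_section_of Ob BN sigma phi"
      by (auto simp: entwined_mor_def)
  next
    assume "\<exists>sigma. comodule_mor Ob B BN rho' BM rho sigma \<and> is_section_of Ob BN sigma phi"
    then obtain s where sc: "comodule_mor Ob B BN rho' BM rho s" and ss: "is_section_of Ob BN s phi"
      by blast
    have sm: "\<And>X. X \<in> Ob \<Longrightarrow> maps_to (BN X) (BM X) (s X)"
      using sc by (simp add: comodule_mor_def)
    have "is_section_of Ob BN (avg act act' rho' s) phi"
      unfolding is_section_of_def
    proof
      fix X assume X: "X \<in> Ob"
      have "eq_on (BN X) (phi X \<odot> avg act act' rho' s X) (avg act' act' rho' (\<lambda>X. phi X \<odot> s X) X)"
        by (rule avg_left[where f=s and g=phi and X=X and BM=BM and BN=BN and act=act and act'=act' and actN=act', OF M' sm[OF X] phia[OF X] X act_maps[OF M' X]])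
      also have "eq_on (BN X) \<dots> (avg act' act' rho' (\<lambda>_. idm) X)"
        by (rule avg_cong[OF M']) (use ss X in \<open>auto simp: is_section_of_def\<close>)
      also have "eq_on (BN X) \<dots> idm" by (rule L_idm[OF M' X])
      finally show "eq_on (BN X) (phi X \<odot> avg act act' rho' s X) idm" .
    qed
    then show "\<exists>sigma. entwined_mor Ob B BA BN rho' act' BM rho act sigma \<and> is_section_of Ob BN sigma phi"
      using avg_ent[OF sc] by blast
  qed
  have R: "(\<exists>r. entwined_mor Ob B BA BN rho' act' BM rho act r \<and> is_retraction_of Ob BM r phi)
            \<longleftrightarrow> (\<exists>r. comodule_mor Ob B BN rho' BM rho r \<and> is_retraction_of Ob BM r phi)"
  proof
    assume "\<exists>r. entwined_mor Ob B BA BN rho' act' BM rho act r \<and> is_retraction_of Ob BM r phi"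
    then show "\<exists>r. comodule_mor Ob B BN rho' BM rho r \<and> is_retraction_of Ob BM r phi"
      by (auto simp: entwined_mor_def)
  next
    assume "\<exists>r. comodule_mor Ob B BN rho' BM rho r \<and> is_retraction_of Ob BM r phi"
    then obtain r where rc: "comodule_mor Ob B BN rho' BM rho r" and rr: "is_retraction_of Ob BM r phi"
      by blast
    have "is_retraction_of Ob BM (avg act act' rho' r) phi"
      unfolding is_retraction_of_def
    proof
      fix X assume X: "X \<in> Ob"
      have "eq_on (BM X) (avg act act' rho' r X \<odot> phi X) (avg act act rho (\<lambda>X. r X \<odot> phi X) X)"
        by (rule avg_right[where h=phi and f=r and X=X and BN=BN and BN'=BM and actN=act' and act'=act and act=act, OF M' M phim[OF X] phico[OF X] phia[OF X] X])
      also have "eq_on (BM X) \<dots> (avg act act rho (\<lambda>_. idm) X)"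
        by (rule avg_cong[OF M]) (use rr X in \<open>auto simp: is_retraction_of_def\<close>)
      also have "eq_on (BM X) \<dots> idm" by (rule L_idm[OF M X])
      finally show "eq_on (BM X) (avg act act' rho' r X \<odot> phi X) idm" .
    qed
    then show "\<exists>r. entwined_mor Ob B BA BN rho' act' BM rho act r \<and> is_retraction_of Ob BM r phi"
      using avg_ent[OF rc] by blast
  qed
  show ?thesis using S R by blast
qed

end
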